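(* Forgetting the action on $\mathcal M$, $(f_{\mathcal D},f_{\mathcal M})\mapsto f_{\mathcal D}$ and $(\delta_{\mathcal D},\delta_{\mathcal M})\mapsto\delta_{\mathcal D}$, maps $\mathrm{Aut}(\mathcal D,\mathcal M)$ into $\mathrm{Aut}(\mathcal D)_{\mathcal J}$ and $\mathrm{Der}(\mathcal D,\mathcal M)$ into $\mathrm{Der}(\mathcal D)_{\mathcal J}$.
   Context: Let $\Bbbk$ be a field of characteristic zero, $V$ a $2n$-dimensional $\Bbbk$-vector space with symplectic form $\omega$. Let $D$ be the universal enveloping algebra of the Heisenberg Lie algebra $V\oplus\Bbbk\hbar$ ($[x,y]=\omega(x,y)\hbar$, $\hbar$ central), graded with $V$ in degree 1 and $\hbar$ in degree 2; let $\mathcal D=\prod_{i\geq0}D^i$ and $\mathcal A=\mathcal D/\hbar\mathcal D$. Fix a Lagrangian subspace $\mathfrak x\subset V$, let $\mathcal M=\mathcal D/\mathcal D\mathfrak x$, and let $\mathcal J\subset\mathcal D$ be the preimage of the ideal $\mathcal A\mathfrak x$ under $\mathcal D\to\mathcal A$. $\mathrm{Aut}(\mathcal D)$ (resp. $\mathrm{Der}(\mathcal D)$) is the group of $\Bbbk[[\hbar]]$-linear continuous automorphisms (resp. Lie algebra of continuous $\Bbbk[[\hbar]]$-linear derivations) of $\mathcal D$, and $\mathrm{Aut}(\mathcal D)_{\mathcal J}$, $\mathrm{Der}(\mathcal D)_{\mathcal J}$ consist of those $f$ with $f(\mathcal J)\subset\mathcal J$. $\mathrm{Der}(\mathcal D,\mathcal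 M)$ is the Lie algebra of pairs $(\delta_{\mathcal D},\delta_{\mathcal M})$ with $\delta_{\mathcal D}\in\mathrm{Der}(\mathcal D)$ and $\delta_{\mathcal M}:\mathcal M\to\mathcal M$ continuous $\Bbbk[[\hbar]]$-linear with $\delta_{\mathcal M}(um)=\delta_{\mathcal D}(u)m+u\,\delta_{\mathcal M}(m)$; $\mathrm{Aut}(\mathcal D,\mathcal M)$ is the group of pairs $(f_{\mathcal D},f_{\mathcal M})$ with $f_{\mathcal D}\in\mathrm{Aut}(\mathcal D)$ and $f_{\mathcal M}:\mathcal M\to\mathcal M$ a continuous $\Bbbk[[\hbar]]$-linear bijection with $f_{\mathcal M}(um)=f_{\mathcal D}(u)f_{\mathcal M}(m)$. *)

theory Defs
  imports Main "HOL-Library.Function_Algebras"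
begin

text \<open>
V is coordinatised by a basis indexed by a finite type 'i,
the symplectic form omega is given by its Gram matrix W (omega(e_i,e_j) = W i j).
The completed enveloping algebra of the Heisenberg Lie algebra (V in degree 1,
hbar in degree 2) is realised, via the (grading preserving) symmetrisation /
Weyl-ordering isomorphism, as the algebra of all formal series
  sum over (alpha,m) of u(alpha,m) x^alpha hbar^m
(every homogeneous piece is finite dimensional, so the degree-wise product is
the set of all coefficient functions) with the Moyal product
  a * b = mult (exp((hbar/2) sum_ij W i j d_i (x) d_j)(a (x) b)),
for which x_i * x_j - x_j * x_i = W i j hbar.
\<close>

type_synonym ('i,'k) ser = "(('i \<Rightarrow> nat) \<times> nat) \<Rightarrow> 'k"

definition unitv :: "'i \<Rightarrow> 'i \<Rightarrow> nat" where
  "unitv i = (\<lambda>j. if j = i then 1 else 0)"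

definition ffact :: "nat \<Rightarrow> nat \<Rightarrow> 'k::field_char_0" where
  "ffact a c = of_nat (fact a div fact (a - c))"

text \<open>coefficient of x^gamma hbar^k in the Moyal product x^alpha * x^beta\<close>
definition mcoef :: "('i::finite \<Rightarrow> 'i \<Rightarrow> 'k::field_char_0) \<Rightarrow> ('i \<Rightarrow> nat) \<Rightarrow> ('i \<Rightarrow> nat)
    \<Rightarrow> nat \<Rightarrow> ('i \<Rightarrow> nat) \<Rightarrow> 'k" where
  "mcoef W \<alpha> \<beta> k \<gamma> = (1 / (2 ^ k * fact k)) *
     (\<Sum>I\<in>{I. length I = k}. \<Sum>J\<in>{J. length J = k}.
        if (\<forall>i. count_list I i \<le> \<alpha> i \<and> count_list J i \<le> \<beta> i \<and>
                 (\<alpha> i - count_list I i) + (\<beta> i - count_list J i) = \<gamma> i)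
        then (\<Prod>t<k. W (I ! t) (J ! t)) *
             (\<Prod>i\<in>UNIV. ffact (\<alpha> i) (count_list I i) * ffact (\<beta> i) (count_list J i))
        else 0)"

definition star :: "('i::finite \<Rightarrow> 'i \<Rightarrow> 'k::field_char_0) \<Rightarrow> ('i,'k) ser \<Rightarrow> ('i,'k) ser \<Rightarrow> ('i,'k) ser" where
  "star W a b = (\<lambda>(\<gamma>, m).
     \<Sum>((\<alpha>, p), (\<beta>, q)) \<in> {((\<alpha>, p), (\<beta>, q)). p + q \<le> m \<and>
          sum \<alpha> UNIV + sum \<beta> UNIV = sum \<gamma> UNIV + 2 * (m - p - q)}.
       a (\<alpha>, p) * b (\<beta>, q) * mcoef W \<alpha> \<beta> (m - p - q) \<gamma>)"

text \<open>k[[hbar]]-module structure: multiplication by the power series sum_p c p hbar^p\<close>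
definition hmult :: "(nat \<Rightarrow> 'k::field_char_0) \<Rightarrow> ('i,'k) ser \<Rightarrow> ('i,'k) ser" where
  "hmult c u = (\<lambda>(\<alpha>, m). \<Sum>p\<le>m. c p * u (\<alpha>, m - p))"

definition hser :: "(nat \<Rightarrow> 'k::field_char_0) \<Rightarrow> ('i,'k) ser" where
  "hser c = (\<lambda>(\<alpha>, m). if \<alpha> = (\<lambda>_. 0) then c m else 0)"

definition hbar :: "('i,'k::field_char_0) ser" where
  "hbar = hser (\<lambda>m. if m = 1 then 1 else 0)"

text \<open>the element of V (degree one) with coordinates v\<close>
definition lin :: "('i::finite \<Rightarrow> 'k::field_char_0) \<Rightarrow> ('i,'k) ser" where
  "lin v = (\<lambda>(\<alpha>, m). if m = 0 then (\<Sum>i\<in>UNIV. if \<alpha> = unitv i then v i else 0) else 0)"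

definition bform :: "('i::finite \<Rightarrow> 'i \<Rightarrow> 'k::field_char_0) \<Rightarrow> ('i \<Rightarrow> 'k) \<Rightarrow> ('i \<Rightarrow> 'k) \<Rightarrow> 'k" where
  "bform W u v = (\<Sum>i\<in>UNIV. \<Sum>j\<in>UNIV. u i * W i j * v j)"

definition symplectic :: "('i::finite \<Rightarrow> 'i \<Rightarrow> 'k::field_char_0) \<Rightarrow> bool" where
  "symplectic W \<longleftrightarrow> (\<forall>i j. W i j = - W j i) \<and>
     (\<forall>u. (\<forall>v. bform W u v = 0) \<longrightarrow> u = (\<lambda>_. 0))"

definition lagrangian :: "('i::finite \<Rightarrow> 'i \<Rightarrow> 'k::field_char_0) \<Rightarrow> ('i \<Rightarrow> 'k) set \<Rightarrow> bool" where
  "lagrangian W X \<longleftrightarrow>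
     (\<lambda>_. 0) \<in> X \<and> (\<forall>u\<in>X. \<forall>v\<in>X. (\<lambda>i. u i + v i) \<in> X) \<and>
     (\<forall>c. \<forall>u\<in>X. (\<lambda>i. c * u i) \<in> X) \<and>
     (\<forall>u\<in>X. \<forall>v\<in>X. bform W u v = 0) \<and>
     (\<forall>v. (\<forall>u\<in>X. bform W u v = 0) \<longrightarrow> v \<in> X)"

text \<open>topology: the filtration F_N = prod_{i >= N} D^i (degree |alpha| + 2m)\<close>
definition filt :: "nat \<Rightarrow> ('i::finite,'k::field_char_0) ser set" where
  "filt N = {u. \<forall>\<alpha> m. sum \<alpha> UNIV + 2 * m < N \<longrightarrow> u (\<alpha>, m) = 0}"

definition contD :: "(('i::finite,'k::field_char_0) ser \<Rightarrow> ('i,'k) ser) \<Rightarrow> bool" where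
  "contD f \<longleftrightarrow> (\<forall>N. \<exists>K. \<forall>u\<in>filt K. f u \<in> filt N)"

definition khlin :: "(('i::finite,'k::field_char_0) ser \<Rightarrow> ('i,'k) ser) \<Rightarrow> bool" where
  "khlin f \<longleftrightarrow> (\<forall>u v. f (u + v) = f u + f v) \<and> (\<forall>c u. f (hmult c u) = hmult c (f u))"

definition AutD :: "('i::finite \<Rightarrow> 'i \<Rightarrow> 'k::field_char_0) \<Rightarrow> (('i,'k) ser \<Rightarrow> ('i,'k) ser) set" where
  "AutD W = {f. bij f \<and> khlin f \<and> (\<forall>a b. f (star W a b) = star W (f a) (f b)) \<and> contD f}"

definition DerD :: "('i::finite \<Rightarrow> 'i \<Rightarrow> 'k::field_char_0) \<Rightarrow> (('i,'k) ser \<Rightarrow> ('i,'k) ser) set" where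
  "DerD W = {d. khlin d \<and> (\<forall>a b. d (star W a b) = star W (d a) b + star W a (d b)) \<and> contD d}"

text \<open>the left ideal D x, and J = preimage of A x under D -> A = D / hbar D\<close>
definition DX :: "('i::finite \<Rightarrow> 'i \<Rightarrow> 'k::field_char_0) \<Rightarrow> ('i \<Rightarrow> 'k) set \<Rightarrow> ('i,'k) ser set" where
  "DX W X = {\<Sum>t<(N::nat). star W (u t) (lin (v t)) | N u v. \<forall>t<N. v t \<in> X}"

definition JJ :: "('i::finite \<Rightarrow> 'i \<Rightarrow> 'k::field_char_0) \<Rightarrow> ('i \<Rightarrow> 'k) set \<Rightarrow> ('i,'k) ser set" where
  "JJ W X = {u. \<exists>w\<in>DX W X. \<exists>v. u - w = star W hbar v}"

definition AutDJ :: "('i::finite \<Rightarrow> 'i \<Rightarrow> 'k::field_char_0) \<Rightarrow> ('i \<Rightarrow> 'k) set \<Rightarrow> (('i,'k) ser \<Rightarrow> ('i,'k) ser) set" where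
  "AutDJ W X = {f \<in> AutD W. \<forall>u\<in>JJ W X. f u \<in> JJ W X}"

definition DerDJ :: "('i::finite \<Rightarrow> 'i \<Rightarrow> 'k::field_char_0) \<Rightarrow> ('i \<Rightarrow> 'k) set \<Rightarrow> (('i,'k) ser \<Rightarrow> ('i,'k) ser) set" where
  "DerDJ W X = {d \<in> DerD W. \<forall>u\<in>JJ W X. d u \<in> JJ W X}"

text \<open>the module M = D / D x, elements are cosets of D x\<close>
definition Mcls :: "('i::finite \<Rightarrow> 'i \<Rightarrow> 'k::field_char_0) \<Rightarrow> ('i \<Rightarrow> 'k) set \<Rightarrow> ('i,'k) ser \<Rightarrow> ('i,'k) ser set" where
  "Mcls W X u = {v. v - u \<in> DX W X}"

definition Mcar :: "('i::finite \<Rightarrow> 'i \<Rightarrow> 'k::field_char_0) \<Rightarrow> ('i \<Rightarrow> 'k) set \<Rightarrow> ('i,'k) ser set set" where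
  "Mcar W X = range (Mcls W X)"

definition madd :: "('i::finite \<Rightarrow> 'i \<Rightarrow> 'k::field_char_0) \<Rightarrow> ('i \<Rightarrow> 'k) set \<Rightarrow> ('i,'k) ser set \<Rightarrow> ('i,'k) ser set \<Rightarrow> ('i,'k) ser set" where
  "madd W X m1 m2 = (\<Union>v1\<in>m1. \<Union>v2\<in>m2. Mcls W X (v1 + v2))"

definition mact :: "('i::finite \<Rightarrow> 'i \<Rightarrow> 'k::field_char_0) \<Rightarrow> ('i \<Rightarrow> 'k) set \<Rightarrow> ('i,'k) ser \<Rightarrow> ('i,'k) ser set \<Rightarrow> ('i,'k) ser set" where
  "mact W X u m = (\<Union>v\<in>m. Mcls W X (star W u v))"

definition mhmult :: "('i::finite \<Rightarrow> 'i \<Rightarrow> 'k::field_char_0) \<Rightarrow> ('i \<Rightarrow> 'k) set \<Rightarrow> (nat \<Rightarrow> 'k) \<Rightarrow> ('i,'k) ser set \<Rightarrow> ('i,'k) ser set" where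
  "mhmult W X c m = (\<Union>v\<in>m. Mcls W X (hmult c v))"

definition Mfilt :: "('i::finite \<Rightarrow> 'i \<Rightarrow> 'k::field_char_0) \<Rightarrow> ('i \<Rightarrow> 'k) set \<Rightarrow> nat \<Rightarrow> ('i,'k) ser set set" where
  "Mfilt W X N = Mcls W X ` filt N"

definition contM :: "('i::finite \<Rightarrow> 'i \<Rightarrow> 'k::field_char_0) \<Rightarrow> ('i \<Rightarrow> 'k) set \<Rightarrow> (('i,'k) ser set \<Rightarrow> ('i,'k) ser set) \<Rightarrow> bool" where
  "contM W X g \<longleftrightarrow> (\<forall>N. \<exists>K. \<forall>m\<in>Mfilt W X K. g m \<in> Mfilt W X N)"

definition khlinM :: "('i::finite \<Rightarrow> 'i \<Rightarrow> 'k::field_char_0) \<Rightarrow> ('i \<Rightarrow> 'k) set \<Rightarrow> (('i,'k) ser set \<Rightarrow> ('i,'k) ser set) \<Rightarrow> bool" where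
  "khlinM W X g \<longleftrightarrow>
     (\<forall>m1\<in>Mcar W X. \<forall>m2\<in>Mcar W X. g (madd W X m1 m2) = madd W X (g m1) (g m2)) \<and>
     (\<forall>c. \<forall>m\<in>Mcar W X. g (mhmult W X c m) = mhmult W X c (g m))"

definition AutDM :: "('i::finite \<Rightarrow> 'i \<Rightarrow> 'k::field_char_0) \<Rightarrow> ('i \<Rightarrow> 'k) set \<Rightarrow>
    ((('i,'k) ser \<Rightarrow> ('i,'k) ser) \<times> (('i,'k) ser set \<Rightarrow> ('i,'k) ser set)) set" where
  "AutDM W X = {(f, g). f \<in> AutD W \<and> bij_betw g (Mcar W X) (Mcar W X) \<and> khlinM W X g \<and>
     contM W X g \<and> (\<forall>u. \<forall>m\<in>Mcar W X. g (mact W X u m) = mact W X (f u) (g m))}"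

definition DerDM :: "('i::finite \<Rightarrow> 'i \<Rightarrow> 'k::field_char_0) \<Rightarrow> ('i \<Rightarrow> 'k) set \<Rightarrow>
    ((('i,'k) ser \<Rightarrow> ('i,'k) ser) \<times> (('i,'k) ser set \<Rightarrow> ('i,'k) ser set)) set" where
  "DerDM W X = {(d, e). d \<in> DerD W \<and> e ` Mcar W X \<subseteq> Mcar W X \<and> khlinM W X e \<and>
     contM W X e \<and>
     (\<forall>u. \<forall>m\<in>Mcar W X. e (mact W X u m) = madd W X (mact W X (d u) m) (mact W X u (e m)))}"

end

theory Submission
  imports Defs
begin


lemma sum_fun_apply: "(\<Sum>t\<in>A. f t) x = (\<Sum>t\<in>A. f t x)"
  by (induct A rule: infinite_finite_induct) auto

lemma sum_if_const: "(\<Sum>x\<in>A. if P then f x else 0) = (if P then (\<Sum>x\<in>A. f x) else 0)"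
  by (cases P) auto

lemma ffact0[simp]: "ffact a 0 = 1"
  by (simp add: ffact_def)

lemma ffact1: "ffact a (Suc 0) = (if a = 0 then 1 else of_nat a)"
  apply (cases a) apply (simp_all add: ffact_def)
  done

lemma mcoef_0:
  "mcoef W \<alpha> \<beta> 0 \<gamma> = (if \<forall>i. \<alpha> i + \<beta> i = \<gamma> i then 1 else 0)"
proof -
  have e: "{I::'a list. length I = 0} = {[]}" by auto
  show ?thesis unfolding mcoef_def by (simp only: e length_0_conv singleton_conv) simp
qed

lemma mcoef_zeroJ:
  assumes "\<And>J. length J = k \<Longrightarrow> \<not> (\<forall>i. count_list J i \<le> \<beta> i)"
  shows "mcoef W \<alpha> \<beta> k \<gamma> = 0"
proof -
  have "\<And>I J. length J = k \<Longrightarrow> \<not> (\<forall>i. count_list I i \<le> \<alpha> i \<and> count_list J i \<le> \<beta> i \<and>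
                 (\<alpha> i - count_list I i) + (\<beta> i - count_list J i) = \<gamma> i)"
    using assms by blast
  then show ?thesis unfolding mcoef_def
    by (intro mult_eq_0_iff[THEN iffD2] disjI2 sum.neutral ballI if_not_P) auto
qed

lemma mcoef_zeroI:
  assumes "\<And>I. length I = k \<Longrightarrow> \<not> (\<forall>i. count_list I i \<le> \<alpha> i)"
  shows "mcoef W \<alpha> \<beta> k \<gamma> = 0"
proof -
  have "\<And>I J. length I = k \<Longrightarrow> \<not> (\<forall>i. count_list I i \<le> \<alpha> i \<and> count_list J i \<le> \<beta> i \<and>
                 (\<alpha> i - count_list I i) + (\<beta> i - count_list J i) = \<gamma> i)"
    using assms by blast
  then show ?thesis unfolding mcoef_def
    by (intro mult_eq_0_iff[THEN iffD2] disjI2 sum.neutral ballI if_not_P) auto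
qed

lemma mcoef_alpha0:
  "mcoef W (\<lambda>_. 0) \<beta> k \<gamma> = (if k = 0 \<and> \<beta> = \<gamma> then 1 else 0)"
proof (cases k)
  case 0 then show ?thesis by (auto simp: mcoef_0 fun_eq_iff)
next
  case (Suc n)
  have "mcoef W (\<lambda>_. 0) \<beta> k \<gamma> = 0"
    by (rule mcoef_zeroI) (use Suc in \<open>auto simp: length_Suc_conv\<close>)
  then show ?thesis using Suc by simp
qed

lemma mcoef_beta0:
  "mcoef W \<alpha> (\<lambda>_. 0) k \<gamma> = (if k = 0 \<and> \<alpha> = \<gamma> then 1 else 0)"
proof (cases k)
  case 0 then show ?thesis by (auto simp: mcoef_0 fun_eq_iff)
next
  case (Suc n)
  have "mcoef W \<alpha> (\<lambda>_. 0) k \<gamma> = 0"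
    by (rule mcoef_zeroJ) (use Suc in \<open>auto simp: length_Suc_conv\<close>)
  then show ?thesis using Suc by simp
qed

lemma unitv_count2:
  assumes "length J \<ge> 2" shows "\<not> (\<forall>i. count_list J i \<le> unitv j i)"
proof
  assume H: "\<forall>i. count_list J i \<le> unitv j i"
  obtain x y r where J: "J = x # y # r" using assms
    by (metis One_nat_def Suc_1 Suc_le_length_iff le_SucE le_numeral_extra(3) length_0_conv list.size(3) not_one_le_zero)
  have "x = j" using H[rule_format, of x] by (simp add: J unitv_def split: if_splits)
  moreover have "y = j" using H[rule_format, of y] by (simp add: J unitv_def split: if_splits)
  ultimately show False using H[rule_format, of j] by (simp add: J unitv_def)
qed

lemma len1_img: "{I::'a list. length I = 1} = (\<lambda>i. [i]) ` UNIV"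
  by (auto simp: length_Suc_conv)

lemma sum_len1: "(\<Sum>I\<in>{I::'a list. length I = 1}. f I) = (\<Sum>i\<in>UNIV. f [i])"
  unfolding len1_img by (subst sum.reindex) (auto simp: inj_on_def)

lemma unitv_eq: "unitv j i = (if i = j then 1 else 0)"
  by (simp add: unitv_def)

lemma count1: "count_list [x] i = (if x = i then 1 else 0)"
  by simp

lemma prod_ffact1:
  fixes \<alpha> :: "'i::finite \<Rightarrow> nat" and i0 j :: 'i
  shows "(\<Prod>i\<in>UNIV. (ffact (\<alpha> i) (if i0 = i then 1 else 0) :: 'k::field_char_0) * ffact (if i = j then 1 else 0) (if j = i then 1 else 0))
   = (if \<alpha> i0 = 0 then 1 else of_nat (\<alpha> i0))"
proof -
  have "\<And>i. (ffact (\<alpha> i) (if i0 = i then 1 else 0) :: 'k) * ffact (if i = j then 1 else 0) (if j = i then 1 else 0)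
     = (if i = i0 then (if \<alpha> i0 = 0 then 1 else of_nat (\<alpha> i0)) else 1)"
    by (auto simp: ffact1)
  then have "(\<Prod>i\<in>UNIV. (ffact (\<alpha> i) (if i0 = i then 1 else 0) :: 'k::field_char_0) * ffact (if i = j then 1 else 0) (if j = i then 1 else 0))
     = (\<Prod>i\<in>UNIV. if i = i0 then (if \<alpha> i0 = 0 then 1 else of_nat (\<alpha> i0)) else 1)" by simp
  also have "\<dots> = (if \<alpha> i0 = 0 then 1 else of_nat (\<alpha> i0))"
    by (subst prod.delta) auto
  finally show ?thesis .
qed

lemma prod_lt1: "(\<Prod>t<(1::nat). f t) = f 0"
  by (simp add: lessThan_Suc One_nat_def)

lemma prodP:
  fixes \<alpha> :: "'i::finite \<Rightarrow> nat" and r j :: 'i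
  shows "(\<Prod>i\<in>UNIV. (ffact (\<alpha> i) (count_list [r] i) :: 'k::field_char_0) * ffact (unitv j i) (count_list [j] i))
   = (if \<alpha> r = 0 then 1 else of_nat (\<alpha> r))"
proof -
  have "\<And>i. (ffact (\<alpha> i) (count_list [r] i) :: 'k) * ffact (unitv j i) (count_list [j] i) =
     ffact (\<alpha> i) (if r = i then 1 else 0) * ffact (if i = j then 1 else 0) (if j = i then 1 else 0)"
    by (simp only: count1 unitv_eq)
  then show ?thesis by (simp only: prod_ffact1)
qed

lemma mcoef_unitvR1:
  "mcoef W \<alpha> (unitv j) 1 \<gamma> =
     (\<Sum>i0\<in>UNIV. if \<alpha> = \<gamma>(i0 := \<gamma> i0 + 1) then W i0 j * of_nat (\<gamma> i0 + 1) else 0) / 2"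
proof -
  have C: "(\<forall>i. count_list [i0] i \<le> \<alpha> i \<and> count_list [j'] i \<le> unitv j i \<and>
                 (\<alpha> i - count_list [i0] i) + (unitv j i - count_list [j'] i) = \<gamma> i)
        \<longleftrightarrow> j' = j \<and> \<alpha> = \<gamma>(i0 := \<gamma> i0 + 1)" for i0 j'
  proof
    assume H: "\<forall>i. count_list [i0] i \<le> \<alpha> i \<and> count_list [j'] i \<le> unitv j i \<and>
                 (\<alpha> i - count_list [i0] i) + (unitv j i - count_list [j'] i) = \<gamma> i"
    have "j' = j" using H[rule_format, of j'] by (auto simp: unitv_eq split: if_splits)
    moreover have "\<alpha> i = (\<gamma>(i0 := \<gamma> i0 + 1)) i" for i
      using H[rule_format, of i] \<open>j' = j\<close> by (auto simp: unitv_eq split: if_splits)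
    ultimately show "j' = j \<and> \<alpha> = \<gamma>(i0 := \<gamma> i0 + 1)" by auto
  next
    assume "j' = j \<and> \<alpha> = \<gamma>(i0 := \<gamma> i0 + 1)"
    then show "\<forall>i. count_list [i0] i \<le> \<alpha> i \<and> count_list [j'] i \<le> unitv j i \<and>
                 (\<alpha> i - count_list [i0] i) + (unitv j i - count_list [j'] i) = \<gamma> i"
      by (auto simp: unitv_eq)
  qed
  have "mcoef W \<alpha> (unitv j) 1 \<gamma> = (1 / (2 ^ 1 * fact 1)) * (\<Sum>i0\<in>UNIV. \<Sum>j'\<in>UNIV.
        if j' = j \<and> \<alpha> = \<gamma>(i0 := \<gamma> i0 + 1)
        then W i0 j' * (\<Prod>i\<in>UNIV. ffact (\<alpha> i) (count_list [i0] i) * ffact (unitv j i) (count_list [j'] i))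
        else 0)"
    unfolding mcoef_def sum_len1 C prod_lt1 by (simp cong: if_cong)
  also have "\<dots> = (1/2) * (\<Sum>i0\<in>UNIV. if \<alpha> = \<gamma>(i0 := \<gamma> i0 + 1)
        then W i0 j * of_nat (\<gamma> i0 + 1) else 0)"
  proof -
    have "(\<Sum>j'\<in>UNIV.
        if j' = j \<and> \<alpha> = \<gamma>(i0 := \<gamma> i0 + 1)
        then W i0 j' * (\<Prod>i\<in>UNIV. ffact (\<alpha> i) (count_list [i0] i) * ffact (unitv j i) (count_list [j'] i))
        else 0) = (if \<alpha> = \<gamma>(i0 := \<gamma> i0 + 1) then W i0 j * of_nat (\<gamma> i0 + 1) else 0)" for i0
    proof (cases "\<alpha> = \<gamma>(i0 := \<gamma> i0 + 1)")
      case True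
      have "(\<Sum>j'\<in>UNIV.
        if j' = j \<and> \<alpha> = \<gamma>(i0 := \<gamma> i0 + 1)
        then W i0 j' * (\<Prod>i\<in>UNIV. ffact (\<alpha> i) (count_list [i0] i) * ffact (unitv j i) (count_list [j'] i))
        else 0) = W i0 j * (\<Prod>i\<in>UNIV. ffact (\<alpha> i) (count_list [i0] i) * ffact (unitv j i) (count_list [j] i))"
        using True by (simp add: sum.delta)
      also have "\<dots> = W i0 j * of_nat (\<gamma> i0 + 1)" unfolding prodP using True by simp
      finally show ?thesis using True by simp
    qed simp
    then show ?thesis by simp
  qed
  finally show ?thesis by simp
qed

lemma mcoef_unitvR2:
  assumes "k \<ge> 2" shows "mcoef W \<alpha> (unitv j) k \<gamma> = 0"
  by (rule mcoef_zeroJ) (use assms unitv_count2 in auto)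

lemma mcoef_unitvL2:
  assumes "k \<ge> 2" shows "mcoef W (unitv i) \<beta> k \<gamma> = 0"
  by (rule mcoef_zeroI) (use assms unitv_count2 in auto)

lemma prodPL:
  fixes \<beta> :: "'i::finite \<Rightarrow> nat" and r j :: 'i
  shows "(\<Prod>i\<in>UNIV. (ffact (unitv j i) (count_list [j] i) :: 'k::field_char_0) * ffact (\<beta> i) (count_list [r] i))
   = (if \<beta> r = 0 then 1 else of_nat (\<beta> r))"
  using prodP[where \<alpha>=\<beta> and r=r and j=j] by (simp add: mult.commute)

lemma mcoef_unitvL1:
  "mcoef W (unitv i) \<beta> 1 \<gamma> =
     (\<Sum>j0\<in>UNIV. if \<beta> = \<gamma>(j0 := \<gamma> j0 + 1) then W i j0 * of_nat (\<gamma> j0 + 1) else 0) / 2"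
proof -
  have C: "(\<forall>x. count_list [i'] x \<le> unitv i x \<and> count_list [j0] x \<le> \<beta> x \<and>
                 (unitv i x - count_list [i'] x) + (\<beta> x - count_list [j0] x) = \<gamma> x)
        \<longleftrightarrow> i' = i \<and> \<beta> = \<gamma>(j0 := \<gamma> j0 + 1)" for i' j0
  proof
    assume H: "\<forall>x. count_list [i'] x \<le> unitv i x \<and> count_list [j0] x \<le> \<beta> x \<and>
                 (unitv i x - count_list [i'] x) + (\<beta> x - count_list [j0] x) = \<gamma> x"
    have "i' = i" using H[rule_format, of i'] by (auto simp: unitv_eq split: if_splits)
    moreover have "\<beta> x = (\<gamma>(j0 := \<gamma> j0 + 1)) x" for x
      using H[rule_format, of x] \<open>i' = i\<close> by (auto simp: unitv_eq split: if_splits)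
    ultimately show "i' = i \<and> \<beta> = \<gamma>(j0 := \<gamma> j0 + 1)" by auto
  next
    assume "i' = i \<and> \<beta> = \<gamma>(j0 := \<gamma> j0 + 1)"
    then show "\<forall>x. count_list [i'] x \<le> unitv i x \<and> count_list [j0] x \<le> \<beta> x \<and>
                 (unitv i x - count_list [i'] x) + (\<beta> x - count_list [j0] x) = \<gamma> x"
      by (auto simp: unitv_eq)
  qed
  have "mcoef W (unitv i) \<beta> 1 \<gamma> = (1/2) * (\<Sum>i'\<in>UNIV. \<Sum>j0\<in>UNIV.
        if i' = i \<and> \<beta> = \<gamma>(j0 := \<gamma> j0 + 1)
        then W i' j0 * (\<Prod>x\<in>UNIV. ffact (unitv i x) (count_list [i'] x) * ffact (\<beta> x) (count_list [j0] x))
        else 0)"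
    unfolding mcoef_def sum_len1 C prod_lt1 by (simp cong: if_cong)
  also have "\<dots> = (1/2) * (\<Sum>i'\<in>UNIV. \<Sum>j0\<in>UNIV. if i' = i then (if \<beta> = \<gamma>(j0 := \<gamma> j0 + 1)
        then W i j0 * of_nat (\<gamma> j0 + 1) else 0) else 0)"
  proof -
    have "(if i' = i \<and> \<beta> = \<gamma>(j0 := \<gamma> j0 + 1)
        then W i' j0 * (\<Prod>x\<in>UNIV. ffact (unitv i x) (count_list [i'] x) * ffact (\<beta> x) (count_list [j0] x))
        else 0) = (if i' = i then (if \<beta> = \<gamma>(j0 := \<gamma> j0 + 1)
        then W i j0 * of_nat (\<gamma> j0 + 1) else 0) else 0)" for i' j0
    proof (cases "i' = i \<and> \<beta> = \<gamma>(j0 := \<gamma> j0 + 1)")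
      case True
      then show ?thesis using prodPL[where \<beta>=\<beta> and r=j0 and j=i] apply (simp del: count_list.simps) by blast
    qed auto
    then show ?thesis by simp
  qed
  also have "\<dots> = (1/2) * (\<Sum>j0\<in>UNIV. if \<beta> = \<gamma>(j0 := \<gamma> j0 + 1)
        then W i j0 * of_nat (\<gamma> j0 + 1) else 0)"
    by (simp only: sum_if_const sum.delta finite UNIV_I if_True)
  finally show ?thesis by simp
qed

definition Sset :: "('i::finite \<Rightarrow> nat) \<Rightarrow> nat \<Rightarrow> ((('i \<Rightarrow> nat) \<times> nat) \<times> (('i \<Rightarrow> nat) \<times> nat)) set" where
  "Sset \<gamma> m = {((\<alpha>, p), (\<beta>, q)). p + q \<le> m \<and>
          sum \<alpha> UNIV + sum \<beta> UNIV = sum \<gamma> UNIV + 2 * (m - p - q)}"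

lemma star_at:
  "star W a b (\<gamma>, m) = (\<Sum>x\<in>Sset \<gamma> m. a (fst x) * b (snd x) *
      mcoef W (fst (fst x)) (fst (snd x)) (m - snd (fst x) - snd (snd x)) \<gamma>)"
  unfolding star_def Sset_def
  by (simp add: case_prod_beta)

lemma finite_bounded_funs: "finite {\<alpha> :: 'i::finite \<Rightarrow> nat. \<forall>i. \<alpha> i \<le> N}"
proof -
  have "finite {f::'i \<Rightarrow> nat. \<forall>x. (x \<in> UNIV \<longrightarrow> f x \<in> {..N}) \<and> (x \<notin> UNIV \<longrightarrow> f x = 0)}"
    by (rule finite_set_of_finite_funs) auto
  then show ?thesis by simp
qed

lemma finite_Sset: "finite (Sset \<gamma> m)"
proof -
  let ?N = "sum \<gamma> UNIV + 2 * m"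
  let ?B = "{\<alpha> :: 'a \<Rightarrow> nat. \<forall>i. \<alpha> i \<le> ?N} \<times> {..m}"
  have "Sset \<gamma> m \<subseteq> ?B \<times> ?B"
  proof
    fix x assume "x \<in> Sset \<gamma> m"
    then obtain \<alpha> p \<beta> q where x: "x = ((\<alpha>, p), (\<beta>, q))" and h: "p + q \<le> m"
      "sum \<alpha> UNIV + sum \<beta> UNIV = sum \<gamma> UNIV + 2 * (m - p - q)"
      unfolding Sset_def by auto
    have "\<alpha> i \<le> ?N" for i
      using member_le_sum[of i UNIV \<alpha>] h by auto
    moreover have "\<beta> i \<le> ?N" for i
      using member_le_sum[of i UNIV \<beta>] h by auto
    ultimately show "x \<in> ?B \<times> ?B" using x h by auto
  qed
  moreover have "finite (?B \<times> ?B)" using finite_bounded_funs by blast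
  ultimately show ?thesis by (rule finite_subset)
qed

lemma sum_upd: "sum (f(i := y)) UNIV + f i = sum f UNIV + (y::nat)" for f :: "'i::finite \<Rightarrow> nat"
proof -
  have "sum (f(i := y)) UNIV = y + sum f (UNIV - {i})"
    by (simp add: sum.remove[of UNIV i])
  moreover have "sum f UNIV = f i + sum f (UNIV - {i})"
    by (simp add: sum.remove[of UNIV i])
  ultimately show ?thesis by simp
qed

lemma sum_unitv: "sum (unitv j) (UNIV :: 'i::finite set) = 1"
  by (simp add: unitv_eq)

lemma unitv_inj: "unitv i = unitv j \<longleftrightarrow> i = j"
  by (auto simp: unitv_eq fun_eq_iff)



definition mulx :: "'i \<Rightarrow> ('i,'k::field_char_0) ser \<Rightarrow> ('i,'k) ser" where
  "mulx j b = (\<lambda>(\<gamma>, m). if 0 < \<gamma> j then b (\<gamma>(j := \<gamma> j - 1), m) else 0)"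

definition dx :: "'i \<Rightarrow> ('i,'k::field_char_0) ser \<Rightarrow> ('i,'k) ser" where
  "dx i b = (\<lambda>(\<gamma>, m). of_nat (\<gamma> i + 1) * b (\<gamma>(i := \<gamma> i + 1), m))"

definition sh :: "('i,'k::field_char_0) ser \<Rightarrow> ('i,'k) ser" where
  "sh b = (\<lambda>(\<gamma>, m). if 0 < m then b (\<gamma>, m - 1) else 0)"

definition Rop :: "('i::finite \<Rightarrow> 'i \<Rightarrow> 'k::field_char_0) \<Rightarrow> ('i \<Rightarrow> 'k) \<Rightarrow> ('i,'k) ser \<Rightarrow> ('i,'k) ser" where
  "Rop W v a = (\<lambda>x. (\<Sum>j\<in>UNIV. v j * mulx j a x) + sh (\<lambda>y. \<Sum>i\<in>UNIV. \<Sum>j\<in>UNIV. W i j * v j * dx i a y) x / 2)"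

definition Lop :: "('i::finite \<Rightarrow> 'i \<Rightarrow> 'k::field_char_0) \<Rightarrow> ('i \<Rightarrow> 'k) \<Rightarrow> ('i,'k) ser \<Rightarrow> ('i,'k) ser" where
  "Lop W v b = (\<lambda>x. (\<Sum>j\<in>UNIV. v j * mulx j b x) + sh (\<lambda>y. \<Sum>i\<in>UNIV. \<Sum>j\<in>UNIV. v i * W i j * dx j b y) x / 2)"

lemma lin_at: "lin v (\<beta>, q) = (if q = 0 then (\<Sum>j\<in>UNIV. if \<beta> = unitv j then v j else 0) else 0)"
  by (simp add: lin_def)

lemma lin_unitv: "lin v (unitv j, 0) = v j"
proof -
  have "(\<Sum>j'\<in>UNIV. if unitv j = unitv j' then v j' else 0) = v j"
    by (simp add: unitv_inj sum.delta)
  then show ?thesis by (simp add: lin_at)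
qed

lemma lin_notunit: "(\<forall>j. (\<beta>, q) \<noteq> (unitv j, 0)) \<Longrightarrow> lin v (\<beta>, q) = 0"
  by (auto simp: lin_at intro!: sum.neutral)

lemma unitv_cond0:
  "(\<forall>i. \<alpha> i + unitv j i = \<gamma> i) \<longleftrightarrow> 0 < \<gamma> j \<and> \<alpha> = \<gamma>(j := \<gamma> j - 1)"
proof
  assume H: "\<forall>i. \<alpha> i + unitv j i = \<gamma> i"
  have "\<alpha> j + 1 = \<gamma> j" using H[rule_format, of j] by (simp add: unitv_eq)
  moreover have "\<alpha> i = \<gamma> i" if "i \<noteq> j" for i using H[rule_format, of i] that by (simp add: unitv_eq)
  ultimately show "0 < \<gamma> j \<and> \<alpha> = \<gamma>(j := \<gamma> j - 1)" by (auto simp: fun_eq_iff)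
next
  assume "0 < \<gamma> j \<and> \<alpha> = \<gamma>(j := \<gamma> j - 1)"
  then show "\<forall>i. \<alpha> i + unitv j i = \<gamma> i" by (auto simp: unitv_eq)
qed

lemma star_R:
  fixes W :: "'i::finite \<Rightarrow> 'i \<Rightarrow> 'k::field_char_0" and a :: "('i,'k) ser"
  shows "star W a (lin v) = Rop W v a"
proof (rule ext, clarify)
  fix \<gamma> :: "'i \<Rightarrow> nat" and m :: nat
  define S where "S = Sset \<gamma> m"
  define x1 where "x1 (j::'i) = ((\<gamma>(j := \<gamma> j - 1), m), (unitv j, 0::nat))" for j
  define x2 where "x2 (j::'i) i = ((\<gamma>(i := \<gamma> i + 1), m - 1), (unitv j, 0::nat))" for j i
  define c1 where "c1 (j::'i) = (if 0 < \<gamma> j then a (\<gamma>(j := \<gamma> j - 1), m) * v j else 0)" for j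
  define c2 where "c2 (j::'i) (i::'i) = (if 0 < m then a (\<gamma>(i := \<gamma> i + 1), m - 1) * v j * (W i j * of_nat (\<gamma> i + 1) / 2) else 0)" for j i
  have fS: "finite S" unfolding S_def by (rule finite_Sset)
  have key: "a (fst x) * lin v (snd x) * mcoef W (fst (fst x)) (fst (snd x)) (m - snd (fst x) - snd (snd x)) \<gamma>
     = (\<Sum>j\<in>UNIV. (if x = x1 j then c1 j else 0) + (\<Sum>i\<in>UNIV. if x = x2 j i then c2 j i else 0))"
    if xS: "x \<in> S" for x
  proof -
    obtain \<alpha> p \<beta> q where x: "x = ((\<alpha>, p), (\<beta>, q))" by (metis prod.collapse)
    have pq: "p + q \<le> m" using xS unfolding x S_def Sset_def by auto
    show ?thesis
    proof (cases "\<exists>j0. (\<beta>, q) = (unitv j0, 0)")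
      case False
      then have "lin v (\<beta>, q) = 0" by (intro lin_notunit) auto
      moreover have "x \<noteq> x1 j" "x \<noteq> x2 j i" for j i
        using False unfolding x x1_def x2_def by auto
      ultimately show ?thesis unfolding x by simp
    next
      case True
      then obtain j0 where bq: "\<beta> = unitv j0" "q = 0" by auto
      have other: "x \<noteq> x1 j" "x \<noteq> x2 j i" if "j \<noteq> j0" for j i
        using that unfolding x x1_def x2_def bq by (auto simp: unitv_inj)
      have "(\<Sum>j\<in>UNIV. (if x = x1 j then c1 j else 0) + (\<Sum>i\<in>UNIV. if x = x2 j i then c2 j i else 0))
          = (if x = x1 j0 then c1 j0 else 0) + (\<Sum>i\<in>UNIV. if x = x2 j0 i then c2 j0 i else 0)"
        by (subst sum.remove[of UNIV j0]) (auto simp: other intro!: sum.neutral)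
      also have "\<dots> = a (\<alpha>, p) * v j0 * mcoef W \<alpha> (unitv j0) (m - p) \<gamma>"
      proof (cases "p = m")
        case True
        have "(if x = x2 j0 i then c2 j0 i else 0) = 0" for i
          using True unfolding x x2_def c2_def by auto
        moreover have "(if x = x1 j0 then c1 j0 else 0) =
            (if 0 < \<gamma> j0 \<and> \<alpha> = \<gamma>(j0 := \<gamma> j0 - 1) then a (\<alpha>, p) * v j0 else 0)"
          using True unfolding x x1_def c1_def bq by auto
        moreover have "mcoef W \<alpha> (unitv j0) (m - p) \<gamma> = (if 0 < \<gamma> j0 \<and> \<alpha> = \<gamma>(j0 := \<gamma> j0 - 1) then 1 else 0)"
        proof -
          have "m - p = 0" using True by simp
          then show ?thesis by (simp only: mcoef_0 unitv_cond0)
        qed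
        ultimately show ?thesis by simp
      next
        case False
        show ?thesis
        proof (cases "p + 1 = m")
          case True
          have nx1: "x \<noteq> x1 j0" using True unfolding x x1_def by auto
          have e2: "(if x = x2 j0 i then c2 j0 i else 0) =
             a (\<alpha>, p) * v j0 * ((if \<alpha> = \<gamma>(i := \<gamma> i + 1) then W i j0 * of_nat (\<gamma> i + 1) else 0) / 2)" for i
            using True unfolding x x2_def c2_def bq by auto
          have mc: "mcoef W \<alpha> (unitv j0) (m - p) \<gamma> =
              (\<Sum>i\<in>UNIV. if \<alpha> = \<gamma>(i := \<gamma> i + 1) then W i j0 * of_nat (\<gamma> i + 1) else 0) / 2"
          proof -
            have "m - p = 1" using True by simp
            then show ?thesis by (simp only: mcoef_unitvR1)
          qed
          have "(\<Sum>i\<in>UNIV. if x = x2 j0 i then c2 j0 i else 0) =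
             (\<Sum>i\<in>UNIV. a (\<alpha>, p) * v j0 * ((if \<alpha> = \<gamma>(i := \<gamma> i + 1) then W i j0 * of_nat (\<gamma> i + 1) else 0) / 2))"
            by (rule sum.cong) (simp_all only: e2)
          also have "\<dots> = a (\<alpha>, p) * v j0 * mcoef W \<alpha> (unitv j0) (m - p) \<gamma>"
            unfolding mc by (simp only: sum_distrib_left sum_divide_distrib)
          finally show ?thesis using nx1 by simp
        next
          case False2: False
          have "x \<noteq> x1 j0" "x \<noteq> x2 j0 i" for i
            using False False2 pq unfolding x x1_def x2_def by auto
          moreover have "mcoef W \<alpha> (unitv j0) (m - p) \<gamma> = 0"
            using False False2 pq by (intro mcoef_unitvR2) auto
          ultimately show ?thesis by simp
        qed
      qed
      finally show ?thesis unfolding x bq by (simp add: lin_unitv)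
    qed
  qed
  have x1S: "0 < \<gamma> j \<Longrightarrow> x1 j \<in> S" for j
    unfolding x1_def S_def Sset_def using sum_upd[of \<gamma> j "\<gamma> j - 1"] by (simp add: sum_unitv)
  have x2S: "0 < m \<Longrightarrow> x2 j i \<in> S" for j i
    unfolding x2_def S_def Sset_def using sum_upd[of \<gamma> i "\<gamma> i + 1"] by (simp add: sum_unitv)
  have s1: "(\<Sum>x\<in>S. if x = x1 j then c1 j else 0) = c1 j" for j
    using x1S[of j] fS by (auto simp: c1_def sum.delta')
  have s2: "(\<Sum>x\<in>S. if x = x2 j i then c2 j i else 0) = c2 j i" for j i
    using x2S[of j i] fS by (auto simp: c2_def sum.delta')
  have "star W a (lin v) (\<gamma>, m) = (\<Sum>x\<in>S. \<Sum>j\<in>UNIV. (if x = x1 j then c1 j else 0) + (\<Sum>i\<in>UNIV. if x = x2 j i then c2 j i else 0))"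
    unfolding star_at S_def[symmetric] by (rule sum.cong[OF refl]) (rule key)
  also have "\<dots> = (\<Sum>x\<in>S. \<Sum>j\<in>UNIV. if x = x1 j then c1 j else 0) + (\<Sum>x\<in>S. \<Sum>j\<in>UNIV. \<Sum>i\<in>UNIV. if x = x2 j i then c2 j i else 0)"
    by (simp only: sum.distrib)
  also have "\<dots> = (\<Sum>j\<in>UNIV. \<Sum>x\<in>S. if x = x1 j then c1 j else 0) + (\<Sum>j\<in>UNIV. \<Sum>x\<in>S. \<Sum>i\<in>UNIV. if x = x2 j i then c2 j i else 0)"
    by (simp only: sum.swap[of _ S])
  also have "\<dots> = (\<Sum>j\<in>UNIV. \<Sum>x\<in>S. if x = x1 j then c1 j else 0) + (\<Sum>j\<in>UNIV. \<Sum>i\<in>UNIV. \<Sum>x\<in>S. if x = x2 j i then c2 j i else 0)"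
    by (simp only: sum.swap[of _ S])
  also have "\<dots> = (\<Sum>j\<in>UNIV. c1 j + (\<Sum>i\<in>UNIV. c2 j i))"
    by (simp only: s1 s2 sum.distrib)
  also have "\<dots> = Rop W v a (\<gamma>, m)"
  proof -
    have A: "(\<Sum>j\<in>UNIV. c1 j) = (\<Sum>j\<in>UNIV. v j * mulx j a (\<gamma>, m))"
      by (rule sum.cong) (auto simp: c1_def mulx_def)
    have B: "(\<Sum>j\<in>UNIV. \<Sum>i\<in>UNIV. c2 j i) =
       sh (\<lambda>y. \<Sum>i\<in>UNIV. \<Sum>j\<in>UNIV. W i j * v j * dx i a y) (\<gamma>, m) / 2"
    proof (cases "0 < m")
      case True
      have "(\<Sum>j\<in>UNIV. \<Sum>i\<in>UNIV. c2 j i) = (\<Sum>i\<in>UNIV. \<Sum>j\<in>UNIV. c2 j i)"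
        by (rule sum.swap)
      also have "\<dots> = (\<Sum>i\<in>UNIV. \<Sum>j\<in>UNIV. W i j * v j * dx i a (\<gamma>, m - 1) / 2)"
        by (intro sum.cong refl) (simp add: c2_def dx_def True)
      also have "\<dots> = sh (\<lambda>y. \<Sum>i\<in>UNIV. \<Sum>j\<in>UNIV. W i j * v j * dx i a y) (\<gamma>, m) / 2"
        using True by (simp add: sh_def sum_divide_distrib)
      finally show ?thesis .
    qed (simp add: c2_def sh_def)
    show ?thesis unfolding Rop_def using A B by (simp add: sum.distrib)
  qed
  finally show "star W a (lin v) (\<gamma>, m) = Rop W v a (\<gamma>, m)" .
qed

lemma unitv_cond0L:
  "(\<forall>i. unitv j i + \<beta> i = \<gamma> i) \<longleftrightarrow> 0 < \<gamma> j \<and> \<beta> = \<gamma>(j := \<gamma> j - 1)"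
  using unitv_cond0[of \<beta> j \<gamma>] by (simp add: add.commute)

lemma star_L:
  fixes W :: "'i::finite \<Rightarrow> 'i \<Rightarrow> 'k::field_char_0" and b :: "('i,'k) ser"
  shows "star W (lin v) b = Lop W v b"
proof (rule ext, clarify)
  fix \<gamma> :: "'i \<Rightarrow> nat" and m :: nat
  define S where "S = Sset \<gamma> m"
  define x1 where "x1 (j::'i) = ((unitv j, 0::nat), (\<gamma>(j := \<gamma> j - 1), m))" for j
  define x2 where "x2 (i::'i) (j::'i) = ((unitv i, 0::nat), (\<gamma>(j := \<gamma> j + 1), m - 1))" for i j
  define c1 where "c1 (j::'i) = (if 0 < \<gamma> j then v j * b (\<gamma>(j := \<gamma> j - 1), m) else 0)" for j
  define c2 where "c2 (i::'i) (j::'i) = (if 0 < m then v i * b (\<gamma>(j := \<gamma> j + 1), m - 1) * (W i j * of_nat (\<gamma> j + 1) / 2) else 0)" for i j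
  have fS: "finite S" unfolding S_def by (rule finite_Sset)
  have key: "lin v (fst x) * b (snd x) * mcoef W (fst (fst x)) (fst (snd x)) (m - snd (fst x) - snd (snd x)) \<gamma>
     = (\<Sum>i\<in>UNIV. (if x = x1 i then c1 i else 0) + (\<Sum>j\<in>UNIV. if x = x2 i j then c2 i j else 0))"
    if xS: "x \<in> S" for x
  proof -
    obtain \<alpha> p \<beta> q where x: "x = ((\<alpha>, p), (\<beta>, q))" by (metis prod.collapse)
    have pq: "p + q \<le> m" using xS unfolding x S_def Sset_def by auto
    show ?thesis
    proof (cases "\<exists>i0. (\<alpha>, p) = (unitv i0, 0)")
      case False
      then have "lin v (\<alpha>, p) = 0" by (intro lin_notunit) auto
      moreover have "x \<noteq> x1 j" "x \<noteq> x2 i j" for i j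
        using False unfolding x x1_def x2_def by auto
      ultimately show ?thesis unfolding x by simp
    next
      case True
      then obtain i0 where bq: "\<alpha> = unitv i0" "p = 0" by auto
      have other: "x \<noteq> x1 i" "x \<noteq> x2 i j" if "i \<noteq> i0" for i j
        using that unfolding x x1_def x2_def bq by (auto simp: unitv_inj)
      have "(\<Sum>i\<in>UNIV. (if x = x1 i then c1 i else 0) + (\<Sum>j\<in>UNIV. if x = x2 i j then c2 i j else 0))
          = (if x = x1 i0 then c1 i0 else 0) + (\<Sum>j\<in>UNIV. if x = x2 i0 j then c2 i0 j else 0)"
        by (subst sum.remove[of UNIV i0]) (auto simp: other intro!: sum.neutral)
      also have "\<dots> = v i0 * b (\<beta>, q) * mcoef W (unitv i0) \<beta> (m - q) \<gamma>"
      proof (cases "q = m")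
        case True
        have "(if x = x2 i0 j then c2 i0 j else 0) = 0" for j
          using True unfolding x x2_def c2_def by auto
        moreover have "(if x = x1 i0 then c1 i0 else 0) =
            (if 0 < \<gamma> i0 \<and> \<beta> = \<gamma>(i0 := \<gamma> i0 - 1) then v i0 * b (\<beta>, q) else 0)"
          using True unfolding x x1_def c1_def bq by auto
        moreover have "mcoef W (unitv i0) \<beta> (m - q) \<gamma> = (if 0 < \<gamma> i0 \<and> \<beta> = \<gamma>(i0 := \<gamma> i0 - 1) then 1 else 0)"
        proof -
          have "m - q = 0" using True by simp
          then show ?thesis by (simp only: mcoef_0 unitv_cond0L)
        qed
        ultimately show ?thesis by simp
      next
        case False
        show ?thesis
        proof (cases "q + 1 = m")
          case True
          have nx1: "x \<noteq> x1 i0" using True unfolding x x1_def by auto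
          have e2: "(if x = x2 i0 j then c2 i0 j else 0) =
             v i0 * b (\<beta>, q) * ((if \<beta> = \<gamma>(j := \<gamma> j + 1) then W i0 j * of_nat (\<gamma> j + 1) else 0) / 2)" for j
            using True unfolding x x2_def c2_def bq by auto
          have mc: "mcoef W (unitv i0) \<beta> (m - q) \<gamma> =
              (\<Sum>j\<in>UNIV. if \<beta> = \<gamma>(j := \<gamma> j + 1) then W i0 j * of_nat (\<gamma> j + 1) else 0) / 2"
          proof -
            have "m - q = 1" using True by simp
            then show ?thesis by (simp only: mcoef_unitvL1)
          qed
          have "(\<Sum>j\<in>UNIV. if x = x2 i0 j then c2 i0 j else 0) =
             (\<Sum>j\<in>UNIV. v i0 * b (\<beta>, q) * ((if \<beta> = \<gamma>(j := \<gamma> j + 1) then W i0 j * of_nat (\<gamma> j + 1) else 0) / 2))"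
            by (rule sum.cong) (simp_all only: e2)
          also have "\<dots> = v i0 * b (\<beta>, q) * mcoef W (unitv i0) \<beta> (m - q) \<gamma>"
            unfolding mc by (simp only: sum_distrib_left sum_divide_distrib)
          finally show ?thesis using nx1 by simp
        next
          case False2: False
          have "x \<noteq> x1 i0" "x \<noteq> x2 i0 j" for j
            using False False2 pq unfolding x x1_def x2_def bq by auto
          moreover have "mcoef W (unitv i0) \<beta> (m - q) \<gamma> = 0"
            using False False2 pq bq by (intro mcoef_unitvL2) auto
          ultimately show ?thesis by simp
        qed
      qed
      finally show ?thesis unfolding x bq by (simp add: lin_unitv)
    qed
  qed
  have x1S: "0 < \<gamma> j \<Longrightarrow> x1 j \<in> S" for j
    unfolding x1_def S_def Sset_def using sum_upd[of \<gamma> j "\<gamma> j - 1"] by (simp add: sum_unitv)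
  have x2S: "0 < m \<Longrightarrow> x2 i j \<in> S" for i j
    unfolding x2_def S_def Sset_def using sum_upd[of \<gamma> j "\<gamma> j + 1"] by (simp add: sum_unitv)
  have s1: "(\<Sum>x\<in>S. if x = x1 j then c1 j else 0) = c1 j" for j
    using x1S[of j] fS by (auto simp: c1_def sum.delta')
  have s2: "(\<Sum>x\<in>S. if x = x2 i j then c2 i j else 0) = c2 i j" for i j
    using x2S[of i j] fS by (auto simp: c2_def sum.delta')
  have "star W (lin v) b (\<gamma>, m) = (\<Sum>x\<in>S. \<Sum>i\<in>UNIV. (if x = x1 i then c1 i else 0) + (\<Sum>j\<in>UNIV. if x = x2 i j then c2 i j else 0))"
    unfolding star_at S_def[symmetric] by (rule sum.cong[OF refl]) (rule key)
  also have "\<dots> = (\<Sum>x\<in>S. \<Sum>i\<in>UNIV. if x = x1 i then c1 i else 0) + (\<Sum>x\<in>S. \<Sum>i\<in>UNIV. \<Sum>j\<in>UNIV. if x = x2 i j then c2 i j else 0)"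
    by (simp only: sum.distrib)
  also have "\<dots> = (\<Sum>i\<in>UNIV. \<Sum>x\<in>S. if x = x1 i then c1 i else 0) + (\<Sum>i\<in>UNIV. \<Sum>x\<in>S. \<Sum>j\<in>UNIV. if x = x2 i j then c2 i j else 0)"
    by (simp only: sum.swap[of _ S])
  also have "\<dots> = (\<Sum>i\<in>UNIV. \<Sum>x\<in>S. if x = x1 i then c1 i else 0) + (\<Sum>i\<in>UNIV. \<Sum>j\<in>UNIV. \<Sum>x\<in>S. if x = x2 i j then c2 i j else 0)"
    by (simp only: sum.swap[of _ S])
  also have "\<dots> = (\<Sum>i\<in>UNIV. c1 i + (\<Sum>j\<in>UNIV. c2 i j))"
    by (simp only: s1 s2 sum.distrib)
  also have "\<dots> = Lop W v b (\<gamma>, m)"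
  proof -
    have A: "(\<Sum>j\<in>UNIV. c1 j) = (\<Sum>j\<in>UNIV. v j * mulx j b (\<gamma>, m))"
      by (rule sum.cong) (auto simp: c1_def mulx_def)
    have B: "(\<Sum>i\<in>UNIV. \<Sum>j\<in>UNIV. c2 i j) =
       sh (\<lambda>y. \<Sum>i\<in>UNIV. \<Sum>j\<in>UNIV. v i * W i j * dx j b y) (\<gamma>, m) / 2"
    proof (cases "0 < m")
      case True
      have "(\<Sum>i\<in>UNIV. \<Sum>j\<in>UNIV. c2 i j) = (\<Sum>i\<in>UNIV. \<Sum>j\<in>UNIV. v i * W i j * dx j b (\<gamma>, m - 1) / 2)"
        by (intro sum.cong refl) (simp add: c2_def dx_def True)
      also have "\<dots> = sh (\<lambda>y. \<Sum>i\<in>UNIV. \<Sum>j\<in>UNIV. v i * W i j * dx j b y) (\<gamma>, m) / 2"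
        using True by (simp add: sh_def sum_divide_distrib)
      finally show ?thesis .
    qed (simp add: c2_def sh_def)
    show ?thesis unfolding Lop_def using A B by (simp add: sum.distrib)
  qed
  finally show "star W (lin v) b (\<gamma>, m) = Lop W v b (\<gamma>, m)" .
qed



lemma mulx_sum: "mulx j (\<lambda>y. \<Sum>t\<in>A. f t y) x = (\<Sum>t\<in>A. mulx j (f t) x)"
  by (cases x) (simp add: mulx_def)
lemma mulx_cmul: "mulx j (\<lambda>y. c * f y) x = c * mulx j f x"
  by (cases x) (simp add: mulx_def)
lemma mulx_add: "mulx j (\<lambda>y. f y + g y) x = mulx j f x + mulx j g x"
  by (cases x) (simp add: mulx_def)
lemma mulx_div: "mulx j (\<lambda>y. f y / c) x = mulx j f x / c"
  by (cases x) (simp add: mulx_def)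

lemma dx_sum: "dx j (\<lambda>y. \<Sum>t\<in>A. f t y) x = (\<Sum>t\<in>A. dx j (f t) x)"
  by (cases x) (simp add: dx_def sum_distrib_left)
lemma dx_cmul: "dx j (\<lambda>y. c * f y) x = c * dx j f x"
  by (cases x) (simp add: dx_def algebra_simps)
lemma dx_add: "dx j (\<lambda>y. f y + g y) x = dx j f x + dx j g x"
  by (cases x) (simp add: dx_def algebra_simps)
lemma dx_div: "dx j (\<lambda>y. f y / c) x = dx j f x / c"
  by (cases x) (simp add: dx_def)

lemma sh_sum: "sh (\<lambda>y. \<Sum>t\<in>A. f t y) x = (\<Sum>t\<in>A. sh (f t) x)"
  by (cases x) (simp add: sh_def)
lemma sh_cmul: "sh (\<lambda>y. c * f y) x = c * sh f x"
  by (cases x) (simp add: sh_def)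
lemma sh_add: "sh (\<lambda>y. f y + g y) x = sh f x + sh g x"
  by (cases x) (simp add: sh_def)
lemma sh_div: "sh (\<lambda>y. f y / c) x = sh f x / c"
  by (cases x) (simp add: sh_def)

lemmas lin_rules = mulx_sum mulx_cmul mulx_add mulx_div dx_sum dx_cmul dx_add dx_div
  sh_sum sh_cmul sh_add sh_div

lemma mulx_mulx: "mulx j (mulx j' f) x = mulx j' (mulx j f) x"
  by (cases x) (auto simp: mulx_def fun_upd_twist)

lemma dx_dx: "dx i (dx i' f) x = dx i' (dx i f) x"
  by (cases x) (auto simp: dx_def fun_upd_twist algebra_simps)

lemma mulx_sh: "mulx j (sh f) x = sh (mulx j f) x"
  by (cases x) (auto simp: mulx_def sh_def)

lemma dx_sh: "dx j (sh f) x = sh (dx j f) x"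
  by (cases x) (auto simp: dx_def sh_def)

lemma dx_mulx: "dx i (mulx j f) x = mulx j (dx i f) x + (if i = j then f x else 0)"
proof (cases x)
  case (Pair \<gamma> m)
  show ?thesis
  proof (cases "i = j")
    case True
    then show ?thesis using Pair
      by (cases "\<gamma> j") (auto simp: dx_def mulx_def algebra_simps fun_upd_idem)
  next
    case False
    then show ?thesis using Pair
      by (auto simp: dx_def mulx_def fun_upd_twist)
  qed
qed

definition Aop :: "('i::finite \<Rightarrow> 'k::field_char_0) \<Rightarrow> ('i,'k) ser \<Rightarrow> ('i,'k) ser" where
  "Aop v a = (\<lambda>x. \<Sum>j\<in>UNIV. v j * mulx j a x)"
definition Blop :: "('i::finite \<Rightarrow> 'i \<Rightarrow> 'k::field_char_0) \<Rightarrow> ('i \<Rightarrow> 'k) \<Rightarrow> ('i,'k) ser \<Rightarrow> ('i,'k) ser" where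
  "Blop W v a = (\<lambda>x. \<Sum>i\<in>UNIV. \<Sum>j\<in>UNIV. v i * W i j * dx j a x)"
definition Brop :: "('i::finite \<Rightarrow> 'i \<Rightarrow> 'k::field_char_0) \<Rightarrow> ('i \<Rightarrow> 'k) \<Rightarrow> ('i,'k) ser \<Rightarrow> ('i,'k) ser" where
  "Brop W v a = (\<lambda>x. \<Sum>i\<in>UNIV. \<Sum>j\<in>UNIV. W i j * v j * dx i a x)"

lemma Lop_alt: "Lop W v b = (\<lambda>x. Aop v b x + sh (Blop W v b) x / 2)"
  unfolding Lop_def Aop_def Blop_def ..
lemma Rop_alt: "Rop W v b = (\<lambda>x. Aop v b x + sh (Brop W v b) x / 2)"
  unfolding Rop_def Aop_def Brop_def ..

lemma AA: "Aop v (Aop v' a) x = Aop v' (Aop v a) x"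
proof -
  have "Aop v (Aop v' a) x = (\<Sum>j\<in>UNIV. \<Sum>j'\<in>UNIV. v j * v' j' * mulx j (mulx j' a) x)"
    unfolding Aop_def by (simp add: lin_rules sum_distrib_left mult.assoc)
  also have "\<dots> = (\<Sum>j'\<in>UNIV. \<Sum>j\<in>UNIV. v j * v' j' * mulx j (mulx j' a) x)"
    by (rule sum.swap)
  also have "\<dots> = Aop v' (Aop v a) x"
    unfolding Aop_def by (simp add: lin_rules sum_distrib_left mult_ac mulx_mulx[of _ _ a])
  finally show ?thesis .
qed

lemma BB: "Blop W v (Brop W v' a) x = Brop W v' (Blop W v a) x"
proof -
  have "Blop W v (Brop W v' a) x = (\<Sum>i\<in>UNIV. \<Sum>j\<in>UNIV. \<Sum>i'\<in>UNIV. \<Sum>j'\<in>UNIV.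
      v i * W i j * (W i' j' * v' j') * dx j (dx i' a) x)"
    unfolding Blop_def Brop_def by (simp add: lin_rules sum_distrib_left mult.assoc)
  also have "\<dots> = (\<Sum>i\<in>UNIV. \<Sum>i'\<in>UNIV. \<Sum>j\<in>UNIV. \<Sum>j'\<in>UNIV.
      v i * W i j * (W i' j' * v' j') * dx j (dx i' a) x)"
    by (rule sum.cong[OF refl], rule sum.swap)
  also have "\<dots> = (\<Sum>i'\<in>UNIV. \<Sum>i\<in>UNIV. \<Sum>j\<in>UNIV. \<Sum>j'\<in>UNIV.
      v i * W i j * (W i' j' * v' j') * dx j (dx i' a) x)"
    by (rule sum.swap)
  also have "\<dots> = (\<Sum>i'\<in>UNIV. \<Sum>i\<in>UNIV. \<Sum>j'\<in>UNIV. \<Sum>j\<in>UNIV.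
      v i * W i j * (W i' j' * v' j') * dx j (dx i' a) x)"
    by (rule sum.cong[OF refl], rule sum.cong[OF refl], rule sum.swap)
  also have "\<dots> = (\<Sum>i'\<in>UNIV. \<Sum>j'\<in>UNIV. \<Sum>i\<in>UNIV. \<Sum>j\<in>UNIV.
      v i * W i j * (W i' j' * v' j') * dx j (dx i' a) x)"
    by (rule sum.cong[OF refl], rule sum.swap)
  also have "\<dots> = Brop W v' (Blop W v a) x"
    unfolding Blop_def Brop_def by (simp add: lin_rules sum_distrib_left mult_ac dx_dx[of _ _ a])
  finally show ?thesis .
qed

definition kap :: "('i::finite \<Rightarrow> 'i \<Rightarrow> 'k::field_char_0) \<Rightarrow> ('i \<Rightarrow> 'k) \<Rightarrow> ('i \<Rightarrow> 'k) \<Rightarrow> 'k" where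
  "kap W v v' = (\<Sum>i\<in>UNIV. \<Sum>j\<in>UNIV. v i * W i j * v' j)"

lemma BA: "Blop W v (Aop v' a) x = Aop v' (Blop W v a) x + kap W v v' * a x"
proof -
  have "Blop W v (Aop v' a) x = (\<Sum>i\<in>UNIV. \<Sum>j\<in>UNIV. \<Sum>j'\<in>UNIV.
      v i * W i j * v' j' * mulx j' (dx j a) x) + (\<Sum>i\<in>UNIV. \<Sum>j\<in>UNIV. \<Sum>j'\<in>UNIV.
      v i * W i j * v' j' * (if j = j' then a x else 0))"
    unfolding Blop_def Aop_def
    by (simp add: lin_rules dx_mulx sum_distrib_left distrib_left sum.distrib mult.assoc)
  also have "(\<Sum>i\<in>UNIV. \<Sum>j\<in>UNIV. \<Sum>j'\<in>UNIV.
      v i * W i j * v' j' * (if j = j' then a x else 0)) = kap W v v' * a x"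
    unfolding kap_def by (simp add: sum_distrib_right if_distrib sum.delta cong: if_cong)
  also have "(\<Sum>i\<in>UNIV. \<Sum>j\<in>UNIV. \<Sum>j'\<in>UNIV.
      v i * W i j * v' j' * mulx j' (dx j a) x) = (\<Sum>i\<in>UNIV. \<Sum>j'\<in>UNIV. \<Sum>j\<in>UNIV.
      v i * W i j * v' j' * mulx j' (dx j a) x)"
    by (rule sum.cong[OF refl], rule sum.swap)
  also have "\<dots> = (\<Sum>j'\<in>UNIV. \<Sum>i\<in>UNIV. \<Sum>j\<in>UNIV.
      v i * W i j * v' j' * mulx j' (dx j a) x)"
    by (rule sum.swap)
  also have "\<dots> = Aop v' (Blop W v a) x"
    unfolding Blop_def Aop_def by (simp add: lin_rules sum_distrib_left mult_ac)
  finally show ?thesis .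
qed

lemma BA': "Brop W v' (Aop v a) x = Aop v (Brop W v' a) x + kap W v v' * a x"
proof -
  have "Brop W v' (Aop v a) x = (\<Sum>i\<in>UNIV. \<Sum>j\<in>UNIV. \<Sum>j'\<in>UNIV.
      W i j * v' j * v j' * mulx j' (dx i a) x) + (\<Sum>i\<in>UNIV. \<Sum>j\<in>UNIV. \<Sum>j'\<in>UNIV.
      W i j * v' j * v j' * (if i = j' then a x else 0))"
    unfolding Brop_def Aop_def
    by (simp add: lin_rules dx_mulx sum_distrib_left distrib_left sum.distrib mult.assoc)
  also have "(\<Sum>i\<in>UNIV. \<Sum>j\<in>UNIV. \<Sum>j'\<in>UNIV.
      W i j * v' j * v j' * (if i = j' then a x else 0)) = kap W v v' * a x"
    unfolding kap_def by (simp add: sum_distrib_right sum_distrib_left if_distrib sum.delta mult_ac cong: if_cong)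
  also have "(\<Sum>i\<in>UNIV. \<Sum>j\<in>UNIV. \<Sum>j'\<in>UNIV.
      W i j * v' j * v j' * mulx j' (dx i a) x) = (\<Sum>i\<in>UNIV. \<Sum>j'\<in>UNIV. \<Sum>j\<in>UNIV.
      W i j * v' j * v j' * mulx j' (dx i a) x)"
    by (rule sum.cong[OF refl], rule sum.swap)
  also have "\<dots> = (\<Sum>j'\<in>UNIV. \<Sum>i\<in>UNIV. \<Sum>j\<in>UNIV.
      W i j * v' j * v j' * mulx j' (dx i a) x)"
    by (rule sum.swap)
  also have "\<dots> = Aop v (Brop W v' a) x"
    unfolding Brop_def Aop_def by (simp add: lin_rules sum_distrib_left mult_ac)
  finally show ?thesis .
qed

lemma Aop_add: "Aop v (\<lambda>y. f y + g y) x = Aop v f x + Aop v g x"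
  unfolding Aop_def by (simp add: lin_rules distrib_left sum.distrib)
lemma Aop_div: "Aop v (\<lambda>y. f y / c) x = Aop v f x / c"
  unfolding Aop_def by (simp add: lin_rules sum_divide_distrib)
lemma Aop_sh: "Aop v (sh f) x = sh (Aop v f) x"
  unfolding Aop_def by (simp add: lin_rules mulx_sh)
lemma Blop_add: "Blop W v (\<lambda>y. f y + g y) x = Blop W v f x + Blop W v g x"
  unfolding Blop_def by (simp add: lin_rules distrib_left sum.distrib)
lemma Blop_div: "Blop W v (\<lambda>y. f y / c) x = Blop W v f x / c"
  unfolding Blop_def by (simp add: lin_rules sum_divide_distrib)
lemma Blop_sh: "Blop W v (sh f) x = sh (Blop W v f) x"
  unfolding Blop_def by (simp add: lin_rules dx_sh)
lemma Brop_add: "Brop W v (\<lambda>y. f y + g y) x = Brop W v f x + Brop W v g x"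
  unfolding Brop_def by (simp add: lin_rules distrib_left sum.distrib)
lemma Brop_div: "Brop W v (\<lambda>y. f y / c) x = Brop W v f x / c"
  unfolding Brop_def by (simp add: lin_rules sum_divide_distrib)
lemma Brop_sh: "Brop W v (sh f) x = sh (Brop W v f) x"
  unfolding Brop_def by (simp add: lin_rules dx_sh)

lemma Blop_addf: "Blop W v (\<lambda>y. f y + g y) = (\<lambda>x. Blop W v f x + Blop W v g x)"
  by (rule ext, rule Blop_add)
lemma Blop_divf: "Blop W v (\<lambda>y. f y / c) = (\<lambda>x. Blop W v f x / c)"
  by (rule ext, rule Blop_div)
lemma Blop_shf: "Blop W v (sh f) = sh (Blop W v f)"
  by (rule ext, rule Blop_sh)
lemma Brop_addf: "Brop W v (\<lambda>y. f y + g y) = (\<lambda>x. Brop W v f x + Brop W v g x)"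
  by (rule ext, rule Brop_add)
lemma Brop_divf: "Brop W v (\<lambda>y. f y / c) = (\<lambda>x. Brop W v f x / c)"
  by (rule ext, rule Brop_div)
lemma Brop_shf: "Brop W v (sh f) = sh (Brop W v f)"
  by (rule ext, rule Brop_sh)
lemma BAf: "Blop W v (Aop v' a) = (\<lambda>x. Aop v' (Blop W v a) x + kap W v v' * a x)"
  by (rule ext, rule BA)
lemma BA'f: "Brop W v' (Aop v a) = (\<lambda>x. Aop v (Brop W v' a) x + kap W v v' * a x)"
  by (rule ext, rule BA')

lemma LR: "Lop W v (Rop W v' a) = Rop W v' (Lop W v a)"
proof (rule ext)
  fix x
  have L: "Lop W v (Rop W v' a) x = Aop v (Aop v' a) x + sh (Aop v (Brop W v' a)) x / 2 +
      (sh (Aop v' (Blop W v a)) x + kap W v v' * sh a x + sh (sh (Blop W v (Brop W v' a))) x / 2) / 2"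
    unfolding Lop_alt Rop_alt
    by (simp add: Aop_add Aop_div Aop_sh Blop_add Blop_div Blop_sh Blop_addf Blop_divf Blop_shf BAf sh_add sh_div sh_cmul)
  have R: "Rop W v' (Lop W v a) x = Aop v' (Aop v a) x + sh (Aop v' (Blop W v a)) x / 2 +
      (sh (Aop v (Brop W v' a)) x + kap W v v' * sh a x + sh (sh (Brop W v' (Blop W v a))) x / 2) / 2"
    unfolding Lop_alt Rop_alt
    by (simp add: Aop_add Aop_div Aop_sh Brop_add Brop_div Brop_sh Brop_addf Brop_divf Brop_shf BA'f sh_add sh_div sh_cmul)
  have e1: "(\<lambda>y. Blop W v (Brop W v' a) y) = (\<lambda>y. Brop W v' (Blop W v a) y)" by (rule ext, rule BB)
  show "Lop W v (Rop W v' a) x = Rop W v' (Lop W v a) x"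
    unfolding L R AA[of v v' a x] using e1 by (simp add: add_divide_distrib algebra_simps)
qed



lemma star_single:
  assumes "\<And>x. x \<in> Sset \<gamma> m \<Longrightarrow> a (fst x) * b (snd x) *
      mcoef W (fst (fst x)) (fst (snd x)) (m - snd (fst x) - snd (snd x)) \<gamma> = (if x = xz then c else 0)"
    and "c \<noteq> 0 \<Longrightarrow> xz \<in> Sset \<gamma> m"
  shows "star W a b (\<gamma>, m) = c"
proof -
  have "star W a b (\<gamma>, m) = (\<Sum>x\<in>Sset \<gamma> m. if x = xz then c else 0)"
    unfolding star_at by (rule sum.cong[OF refl]) (rule assms(1))
  also have "\<dots> = c" using assms(2) finite_Sset[of \<gamma> m] by (auto simp: sum.delta')
  finally show ?thesis .
qed

definition one :: "('i::finite,'k::field_char_0) ser" where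
  "one = (\<lambda>(\<alpha>, m). if \<alpha> = (\<lambda>_. 0) \<and> m = 0 then 1 else 0)"

lemma star_one_R: "star W a one = a"
proof (rule ext, clarify)
  fix \<gamma> m
  show "star W a one (\<gamma>, m) = a (\<gamma>, m)"
  proof (rule star_single[where xz="((\<gamma>, m), ((\<lambda>_. 0), 0))"])
    fix x assume xS: "x \<in> Sset \<gamma> m"
    obtain \<alpha> p \<beta> q where x: "x = ((\<alpha>, p), (\<beta>, q))" by (metis prod.collapse)
    have pq: "p + q \<le> m" using xS unfolding x Sset_def by auto
    show "a (fst x) * one (snd x) * mcoef W (fst (fst x)) (fst (snd x)) (m - snd (fst x) - snd (snd x)) \<gamma>
      = (if x = ((\<gamma>, m), ((\<lambda>_. 0), 0)) then a (\<gamma>, m) else 0)"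
      using pq unfolding x by (auto simp: one_def mcoef_beta0)
  qed (auto simp: Sset_def)
qed

lemma star_one_L: "star W one b = b"
proof (rule ext, clarify)
  fix \<gamma> m
  show "star W one b (\<gamma>, m) = b (\<gamma>, m)"
  proof (rule star_single[where xz="(((\<lambda>_. 0), 0), (\<gamma>, m))"])
    fix x assume xS: "x \<in> Sset \<gamma> m"
    obtain \<alpha> p \<beta> q where x: "x = ((\<alpha>, p), (\<beta>, q))" by (metis prod.collapse)
    have pq: "p + q \<le> m" using xS unfolding x Sset_def by auto
    show "one (fst x) * b (snd x) * mcoef W (fst (fst x)) (fst (snd x)) (m - snd (fst x) - snd (snd x)) \<gamma>
      = (if x = (((\<lambda>_. 0), 0), (\<gamma>, m)) then b (\<gamma>, m) else 0)"
      using pq unfolding x by (auto simp: one_def mcoef_alpha0)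
  qed (auto simp: Sset_def)
qed

lemma star_hbar: "star W hbar t = sh t"
proof (rule ext, clarify)
  fix \<gamma> m
  show "star W hbar t (\<gamma>, m) = sh t (\<gamma>, m)"
  proof (rule star_single[where xz="(((\<lambda>_. 0), 1), (\<gamma>, m - 1))"])
    fix x assume xS: "x \<in> Sset \<gamma> m"
    obtain \<alpha> p \<beta> q where x: "x = ((\<alpha>, p), (\<beta>, q))" by (metis prod.collapse)
    have pq: "p + q \<le> m" using xS unfolding x Sset_def by auto
    show "hbar (fst x) * t (snd x) * mcoef W (fst (fst x)) (fst (snd x)) (m - snd (fst x) - snd (snd x)) \<gamma>
      = (if x = (((\<lambda>_. 0), 1), (\<gamma>, m - 1)) then sh t (\<gamma>, m) else 0)"
      using pq unfolding x by (auto simp: hbar_def hser_def mcoef_alpha0 sh_def)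
  qed (auto simp: Sset_def sh_def split: if_splits)
qed

lemma hmult_sh: "hmult (\<lambda>p. if p = 1 then 1 else 0) t = sh t"
proof (rule ext, clarify)
  fix \<gamma> m
  show "hmult (\<lambda>p. if p = 1 then 1 else 0) t (\<gamma>, m) = sh t (\<gamma>, m)"
  proof -
    have "\<And>p. (if p = 1 then 1 else 0) * t (\<gamma>, m - p) = (if p = 1 then t (\<gamma>, m - 1) else 0)" by simp
    then show ?thesis by (simp add: hmult_def sh_def sum.delta)
  qed
qed

lemma hmult_0: "hmult (\<lambda>_. 0) t = 0"
  by (rule ext) (simp add: hmult_def split: prod.splits)

lemma star_add_L: "star W (a1 + a2) b = star W a1 b + star W a2 b"
  by (rule ext, clarify) (simp add: star_at distrib_right sum.distrib)
lemma star_add_R: "star W a (b1 + b2) = star W a b1 + star W a b2"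
  by (rule ext, clarify) (simp add: star_at distrib_left distrib_right sum.distrib)
lemma star_neg_L: "star W (- a) b = - star W a b"
  by (rule ext, clarify) (simp add: star_at sum_negf)
lemma star_zero_R: "star W a 0 = 0"
  by (rule ext, clarify) (simp add: star_at)
lemma star_sum_R: "star W a (\<Sum>t\<in>A. f t) = (\<Sum>t\<in>A. star W a (f t))"
proof (induct A rule: infinite_finite_induct)
  case (infinite A) then show ?case by (metis sum.infinite star_zero_R)
next
  case empty then show ?case by (simp only: sum.empty star_zero_R)
next
  case (insert x F)
  have "star W a (\<Sum>t\<in>insert x F. f t) = star W a (f x + (\<Sum>t\<in>F. f t))"
    unfolding sum.insert[OF insert(1) insert(2)] ..
  also have "\<dots> = star W a (f x) + star W a (\<Sum>t\<in>F. f t)" by (rule star_add_R)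
  also have "\<dots> = (\<Sum>t\<in>insert x F. star W a (f t))" unfolding sum.insert[OF insert(1) insert(2)] insert(3) ..
  finally show ?case .
qed



definition pi0 :: "('i,'k) ser \<Rightarrow> ('i \<Rightarrow> nat) \<Rightarrow> 'k" where
  "pi0 u = (\<lambda>\<alpha>. u (\<alpha>, 0))"

definition Tset :: "('i \<Rightarrow> nat) \<Rightarrow> (('i \<Rightarrow> nat) \<times> ('i \<Rightarrow> nat)) set" where
  "Tset \<gamma> = {(\<alpha>, \<beta>). \<forall>i. \<alpha> i + \<beta> i = \<gamma> i}"

definition conv :: "(('i::finite \<Rightarrow> nat) \<Rightarrow> 'k::field_char_0) \<Rightarrow> (('i \<Rightarrow> nat) \<Rightarrow> 'k) \<Rightarrow> ('i \<Rightarrow> nat) \<Rightarrow> 'k" where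
  "conv f g \<gamma> = (\<Sum>p\<in>Tset \<gamma>. f (fst p) * g (snd p))"

definition mx :: "'i \<Rightarrow> (('i \<Rightarrow> nat) \<Rightarrow> 'k::field_char_0) \<Rightarrow> ('i \<Rightarrow> nat) \<Rightarrow> 'k" where
  "mx j g \<beta> = (if 0 < \<beta> j then g (\<beta>(j := \<beta> j - 1)) else 0)"

lemma finite_Tset: "finite (Tset (\<gamma> :: 'i::finite \<Rightarrow> nat))"
proof -
  let ?B = "{\<alpha> :: 'i \<Rightarrow> nat. \<forall>i. \<alpha> i \<le> sum \<gamma> UNIV}"
  have "Tset \<gamma> \<subseteq> ?B \<times> ?B"
  proof
    fix p assume "p \<in> Tset \<gamma>"
    then obtain \<alpha> \<beta> where p: "p = (\<alpha>, \<beta>)" "\<forall>i. \<alpha> i + \<beta> i = \<gamma> i" unfolding Tset_def by auto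
    have "\<gamma> i \<le> sum \<gamma> UNIV" for i by (rule member_le_sum) auto
    moreover have "\<alpha> i \<le> \<gamma> i" "\<beta> i \<le> \<gamma> i" for i using p(2)[rule_format, of i] by linarith+
    ultimately show "p \<in> ?B \<times> ?B" using p(1) by (auto intro: le_trans)
  qed
  then show ?thesis by (rule finite_subset) (intro finite_cartesian_product finite_bounded_funs)
qed

lemma sum_plus_fun: "sum (\<lambda>i. \<alpha> i + \<beta> i) A = sum \<alpha> A + sum \<beta> A"
  by (rule sum.distrib)

lemma star0: "pi0 (star W a b) = conv (pi0 a) (pi0 b)"
proof
  fix \<gamma>
  define h where "h = (\<lambda>p :: ('a \<Rightarrow> nat) \<times> ('a \<Rightarrow> nat). ((fst p, 0::nat), (snd p, 0::nat)))"
  define F where "F x = a (fst x) * b (snd x) * mcoef W (fst (fst x)) (fst (snd x)) (0 - snd (fst x) - snd (snd x)) \<gamma>" for x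
  have sub: "h ` Tset \<gamma> \<subseteq> Sset \<gamma> 0"
  proof
    fix x assume "x \<in> h ` Tset \<gamma>"
    then obtain \<alpha> \<beta> where x: "x = ((\<alpha>, 0), (\<beta>, 0))" and c: "\<forall>i. \<alpha> i + \<beta> i = \<gamma> i"
      unfolding h_def Tset_def by auto
    have "sum \<alpha> UNIV + sum \<beta> UNIV = sum \<gamma> UNIV"
      using c sum.distrib[of \<alpha> \<beta> UNIV] by simp
    then show "x \<in> Sset \<gamma> 0" unfolding x Sset_def by simp
  qed
  have z: "F x = 0" if "x \<in> Sset \<gamma> 0 - h ` Tset \<gamma>" for x
  proof -
    obtain \<alpha> p \<beta> q where x: "x = ((\<alpha>, p), (\<beta>, q))" by (metis prod.collapse)
    have pq: "p = 0" "q = 0" using that unfolding x Sset_def by auto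
    have "\<not> (\<forall>i. \<alpha> i + \<beta> i = \<gamma> i)"
    proof
      assume "\<forall>i. \<alpha> i + \<beta> i = \<gamma> i"
      then have "x \<in> h ` Tset \<gamma>" unfolding x pq h_def Tset_def by (auto intro!: image_eqI[where x="(\<alpha>, \<beta>)"])
      then show False using that by auto
    qed
    then have "mcoef W \<alpha> \<beta> 0 \<gamma> = 0" by (simp only: mcoef_0 if_False)
    then show ?thesis unfolding F_def x pq by simp
  qed
  have "pi0 (star W a b) \<gamma> = (\<Sum>x\<in>Sset \<gamma> 0. F x)"
    unfolding pi0_def star_at F_def ..
  also have "\<dots> = (\<Sum>x\<in>h ` Tset \<gamma>. F x)"
    by (rule sum.mono_neutral_right[OF finite_Sset sub]) (use z in blast)
  also have "\<dots> = (\<Sum>p\<in>Tset \<gamma>. F (h p))"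
  proof -
    have "inj_on h (Tset \<gamma>)" unfolding inj_on_def h_def by (auto simp: prod_eq_iff)
    then show ?thesis by (simp add: sum.reindex o_def)
  qed
  also have "\<dots> = conv (pi0 a) (pi0 b) \<gamma>"
    unfolding conv_def
  proof (rule sum.cong[OF refl])
    fix p assume "p \<in> Tset \<gamma>"
    then obtain \<alpha> \<beta> where p: "p = (\<alpha>, \<beta>)" "\<forall>i. \<alpha> i + \<beta> i = \<gamma> i" unfolding Tset_def by auto
    then show "F (h p) = pi0 a (fst p) * pi0 b (snd p)"
      unfolding F_def h_def pi0_def by (simp add: mcoef_0)
  qed
  finally show "pi0 (star W a b) \<gamma> = conv (pi0 a) (pi0 b) \<gamma>" .
qed

lemma conv_mx: "conv f (mx j g) = mx j (conv f g)"
proof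
  fix \<gamma> :: "'a \<Rightarrow> nat"
  show "conv f (mx j g) \<gamma> = mx j (conv f g) \<gamma>"
  proof (cases "0 < \<gamma> j")
    case False
    have "f (fst p) * mx j g (snd p) = 0" if "p \<in> Tset \<gamma>" for p
    proof -
      from that obtain \<alpha> \<beta> where p: "p = (\<alpha>, \<beta>)" "\<forall>i. \<alpha> i + \<beta> i = \<gamma> i" unfolding Tset_def by auto
      have "\<beta> j = 0" using p(2)[rule_format, of j] False by simp
      then show ?thesis unfolding p mx_def by simp
    qed
    then have "conv f (mx j g) \<gamma> = 0" unfolding conv_def by (simp add: sum.neutral)
    then show ?thesis using False unfolding mx_def by simp
  next
    case True
    let ?g' = "\<gamma>(j := \<gamma> j - 1)"
    have "conv f (mx j g) \<gamma> = (\<Sum>p\<in>{p \<in> Tset \<gamma>. 0 < snd p j}. f (fst p) * g ((snd p)(j := snd p j - 1)))"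
      unfolding conv_def mx_def
      by (subst sum.inter_filter[OF finite_Tset]) (auto intro: sum.cong)
    also have "\<dots> = (\<Sum>p\<in>Tset ?g'. f (fst p) * g (snd p))"
    proof (rule sum.reindex_bij_witness[where i="\<lambda>p. (fst p, (snd p)(j := snd p j + 1))"
          and j="\<lambda>p. (fst p, (snd p)(j := snd p j - 1))"])
      fix p assume "p \<in> {p \<in> Tset \<gamma>. 0 < snd p j}"
      then show "(fst (fst p, (snd p)(j := snd p j - 1)), (snd (fst p, (snd p)(j := snd p j - 1)))(j := snd (fst p, (snd p)(j := snd p j - 1)) j + 1)) = p"
        by (cases p) auto
    next
      fix p assume "p \<in> {p \<in> Tset \<gamma>. 0 < snd p j}"
      then obtain \<alpha> \<beta> where p: "p = (\<alpha>, \<beta>)" "\<forall>i. \<alpha> i + \<beta> i = \<gamma> i" "0 < \<beta> j"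
        unfolding Tset_def by auto
      have "\<alpha> i + (\<beta>(j := \<beta> j - 1)) i = ?g' i" for i
        using p(2)[rule_format, of i] p(3) by (cases "i = j") auto
      then show "(fst p, (snd p)(j := snd p j - 1)) \<in> Tset ?g'"
        unfolding Tset_def p by simp
    next
      fix p assume "p \<in> Tset ?g'"
      then show "(fst (fst p, (snd p)(j := snd p j + 1)), (snd (fst p, (snd p)(j := snd p j + 1)))(j := snd (fst p, (snd p)(j := snd p j + 1)) j - 1)) = p"
        by (cases p) auto
    next
      fix p assume "p \<in> Tset ?g'"
      then obtain \<alpha> \<beta> where p: "p = (\<alpha>, \<beta>)" "\<forall>i. \<alpha> i + \<beta> i = ?g' i"
        unfolding Tset_def by auto
      have "\<alpha> i + (\<beta>(j := \<beta> j + 1)) i = \<gamma> i" for i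
        using p(2)[rule_format, of i] True by (cases "i = j") auto
      then show "(fst p, (snd p)(j := snd p j + 1)) \<in> {p \<in> Tset \<gamma>. 0 < snd p j}"
        unfolding Tset_def p by simp
    next
      fix p assume "p \<in> {p \<in> Tset \<gamma>. 0 < snd p j}"
      then show "f (fst (fst p, (snd p)(j := snd p j - 1))) * g (snd (fst p, (snd p)(j := snd p j - 1))) =
        f (fst p) * g ((snd p)(j := snd p j - 1))" by simp
    qed
    also have "\<dots> = mx j (conv f g) \<gamma>"
      using True unfolding mx_def conv_def by simp
    finally show ?thesis .
  qed
qed



lemma pi0_mulx: "pi0 (mulx j a) = mx j (pi0 a)"
  by (rule ext) (simp add: pi0_def mulx_def mx_def)
lemma pi0_sh: "pi0 (sh a) = (\<lambda>_. 0)"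
  by (rule ext) (simp add: pi0_def sh_def)
lemma pi0_Rop: "pi0 (Rop W v a) = (\<lambda>\<gamma>. \<Sum>j\<in>UNIV. v j * mx j (pi0 a) \<gamma>)"
  by (rule ext) (simp add: Rop_def pi0_def sh_def mulx_def mx_def)
lemma pi0_Lop: "pi0 (Lop W v a) = (\<lambda>\<gamma>. \<Sum>j\<in>UNIV. v j * mx j (pi0 a) \<gamma>)"
  by (rule ext) (simp add: Lop_def pi0_def sh_def mulx_def mx_def)
lemma pi0_add: "pi0 (a + b) = (\<lambda>\<gamma>. pi0 a \<gamma> + pi0 b \<gamma>)"
  by (rule ext) (simp add: pi0_def)
lemma pi0_diff: "pi0 (a - b) = (\<lambda>\<gamma>. pi0 a \<gamma> - pi0 b \<gamma>)"
  by (rule ext) (simp add: pi0_def)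
lemma pi0_sum: "pi0 (\<Sum>t\<in>A. f t) = (\<lambda>\<gamma>. \<Sum>t\<in>A. pi0 (f t) \<gamma>)"
  by (rule ext) (simp add: pi0_def sum_fun_apply)

lemma conv_sum: "conv f (\<lambda>\<gamma>. \<Sum>t\<in>A. g t \<gamma>) = (\<lambda>\<gamma>. \<Sum>t\<in>A. conv f (g t) \<gamma>)"
  by (rule ext) (simp add: conv_def sum_distrib_left sum.swap[of _ _ A])
lemma conv_cmul: "conv f (\<lambda>\<gamma>. c * g \<gamma>) = (\<lambda>\<gamma>. c * conv f g \<gamma>)"
  by (rule ext) (simp add: conv_def sum_distrib_left mult_ac)

definition IdX :: "('i::finite \<Rightarrow> 'k::field_char_0) set \<Rightarrow> (('i \<Rightarrow> nat) \<Rightarrow> 'k) set" where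
  "IdX X = {y. \<exists>(N::nat) a v. (\<forall>t<N. v t \<in> X) \<and> y = (\<lambda>\<gamma>. \<Sum>t<N. \<Sum>j\<in>UNIV. v t j * mx j (a t) \<gamma>)}"

lemma sum_split_add: "(\<Sum>t<(N1::nat) + N2. g t) = (\<Sum>t<N1. g t) + (\<Sum>t<N2. g (N1 + t))"
  by (induct N2) (simp_all add: add.assoc)

lemma IdX_intro: "\<forall>t<(N::nat). v t \<in> X \<Longrightarrow> (\<lambda>\<gamma>. \<Sum>t<N. \<Sum>j\<in>UNIV. v t j * mx j (a t) \<gamma>) \<in> IdX X"
  unfolding IdX_def mem_Collect_eq by (rule exI[of _ N], rule exI[of _ a], rule exI[of _ v]) simp

lemma I_zero: "(\<lambda>_. 0) \<in> IdX X"
  unfolding IdX_def by (rule CollectI, rule exI[of _ 0]) auto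

lemma I_lin: "v \<in> X \<Longrightarrow> (\<lambda>\<gamma>. \<Sum>j\<in>UNIV. v j * mx j g \<gamma>) \<in> IdX X"
  unfolding IdX_def
  by (rule CollectI, rule exI[of _ 1], rule exI[of _ "\<lambda>_. g"], rule exI[of _ "\<lambda>_. v"]) auto

lemma I_add:
  assumes "y1 \<in> IdX X" "y2 \<in> IdX X" shows "(\<lambda>\<gamma>. y1 \<gamma> + y2 \<gamma>) \<in> IdX X"
proof -
  obtain N1 a1 v1 where 1: "\<forall>t<(N1::nat). v1 t \<in> X" "y1 = (\<lambda>\<gamma>. \<Sum>t<N1. \<Sum>j\<in>UNIV. v1 t j * mx j (a1 t) \<gamma>)"
    using assms(1) unfolding IdX_def by auto
  obtain N2 a2 v2 where 2: "\<forall>t<(N2::nat). v2 t \<in> X" "y2 = (\<lambda>\<gamma>. \<Sum>t<N2. \<Sum>j\<in>UNIV. v2 t j * mx j (a2 t) \<gamma>)"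
    using assms(2) unfolding IdX_def by auto
  define a where "a t = (if t < N1 then a1 t else a2 (t - N1))" for t
  define v where "v t = (if t < N1 then v1 t else v2 (t - N1))" for t
  have "\<forall>t<N1 + N2. v t \<in> X" using 1 2 unfolding v_def by auto
  moreover have "(\<lambda>\<gamma>. y1 \<gamma> + y2 \<gamma>) = (\<lambda>\<gamma>. \<Sum>t<N1 + N2. \<Sum>j\<in>UNIV. v t j * mx j (a t) \<gamma>)"
  proof
    fix \<gamma>
    have "(\<Sum>t<N1 + N2. \<Sum>j\<in>UNIV. v t j * mx j (a t) \<gamma>) =
        (\<Sum>t<N1. \<Sum>j\<in>UNIV. v t j * mx j (a t) \<gamma>) + (\<Sum>t<N2. \<Sum>j\<in>UNIV. v (N1 + t) j * mx j (a (N1 + t)) \<gamma>)"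
      by (rule sum_split_add)
    also have "\<dots> = y1 \<gamma> + y2 \<gamma>" unfolding 1 2 a_def v_def by simp
    finally show "y1 \<gamma> + y2 \<gamma> = (\<Sum>t<N1 + N2. \<Sum>j\<in>UNIV. v t j * mx j (a t) \<gamma>)" by simp
  qed
  ultimately show ?thesis unfolding IdX_def by auto
qed

lemma mx_neg: "mx j (\<lambda>\<gamma>. - g \<gamma>) \<gamma>' = - mx j g \<gamma>'"
  by (simp add: mx_def)

lemma I_neg:
  assumes "y \<in> IdX X" shows "(\<lambda>\<gamma>. - y \<gamma>) \<in> IdX X"
proof -
  obtain N a v where 1: "\<forall>t<(N::nat). v t \<in> X" "y = (\<lambda>\<gamma>. \<Sum>t<N. \<Sum>j\<in>UNIV. v t j * mx j (a t) \<gamma>)"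
    using assms unfolding IdX_def by auto
  have "(\<lambda>\<gamma>. - y \<gamma>) = (\<lambda>\<gamma>. \<Sum>t<N. \<Sum>j\<in>UNIV. v t j * mx j (\<lambda>\<gamma>. - a t \<gamma>) \<gamma>)"
    unfolding 1 by (simp add: mx_neg sum_negf)
  then show ?thesis using IdX_intro[OF 1(1), of "\<lambda>t \<gamma>. - a t \<gamma>"] by simp
qed

lemma I_diff: "y1 \<in> IdX X \<Longrightarrow> y2 \<in> IdX X \<Longrightarrow> (\<lambda>\<gamma>. y1 \<gamma> - y2 \<gamma>) \<in> IdX X"
  using I_add[of y1 X "\<lambda>\<gamma>. - y2 \<gamma>"] I_neg[of y2 X] by simp

lemma I_conv:
  assumes "y \<in> IdX X" shows "conv f y \<in> IdX X"
proof -
  obtain N a v where 1: "\<forall>t<(N::nat). v t \<in> X" "y = (\<lambda>\<gamma>. \<Sum>t<N. \<Sum>j\<in>UNIV. v t j * mx j (a t) \<gamma>)"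
    using assms unfolding IdX_def by auto
  have "conv f y = (\<lambda>\<gamma>. \<Sum>t<N. \<Sum>j\<in>UNIV. v t j * mx j (conv f (a t)) \<gamma>)"
    unfolding 1 by (simp add: conv_sum conv_cmul conv_mx)
  then show ?thesis using IdX_intro[OF 1(1), of "\<lambda>t. conv f (a t)"] by simp
qed



lemma DX_intro: "\<forall>t<(N::nat). v t \<in> X \<Longrightarrow> (\<Sum>t<N. star W (u t) (lin (v t))) \<in> DX W X"
  unfolding DX_def by blast

lemma DX_elim:
  assumes "d \<in> DX W X"
  obtains N u v where "\<forall>t<(N::nat). v t \<in> X" "d = (\<Sum>t<N. star W (u t) (lin (v t)))"
  using assms unfolding DX_def by blast

lemma DX_zero: "0 \<in> DX W X"
  using DX_intro[of 0 _ X W] by simp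

lemma DX_add:
  assumes "d1 \<in> DX W X" "d2 \<in> DX W X" shows "d1 + d2 \<in> DX W X"
proof -
  obtain N1 u1 v1 where 1: "\<forall>t<(N1::nat). v1 t \<in> X" "d1 = (\<Sum>t<N1. star W (u1 t) (lin (v1 t)))"
    using assms(1) by (rule DX_elim)
  obtain N2 u2 v2 where 2: "\<forall>t<(N2::nat). v2 t \<in> X" "d2 = (\<Sum>t<N2. star W (u2 t) (lin (v2 t)))"
    using assms(2) by (rule DX_elim)
  define u where "u t = (if t < N1 then u1 t else u2 (t - N1))" for t
  define v where "v t = (if t < N1 then v1 t else v2 (t - N1))" for t
  have "\<forall>t<N1 + N2. v t \<in> X" using 1 2 unfolding v_def by auto
  moreover have "d1 + d2 = (\<Sum>t<N1 + N2. star W (u t) (lin (v t)))"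
    unfolding sum_split_add 1 2 u_def v_def by simp
  ultimately show ?thesis using DX_intro[of "N1 + N2" v X W u] by simp
qed

lemma DX_neg:
  assumes "d \<in> DX W X" shows "- d \<in> DX W X"
proof -
  obtain N u v where 1: "\<forall>t<(N::nat). v t \<in> X" "d = (\<Sum>t<N. star W (u t) (lin (v t)))"
    using assms by (rule DX_elim)
  have "- d = (\<Sum>t<N. star W (- u t) (lin (v t)))"
    unfolding 1 by (simp add: star_neg_L sum_negf)
  then show ?thesis using DX_intro[OF 1(1), of W "\<lambda>t. - u t"] by simp
qed

lemma DX_diff: "d1 \<in> DX W X \<Longrightarrow> d2 \<in> DX W X \<Longrightarrow> d1 - d2 \<in> DX W X"
  using DX_add[of d1 W X "- d2"] DX_neg[of d2 W X] by simp

lemma DX_lin: "v \<in> X \<Longrightarrow> lin v \<in> DX W X"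
  using DX_intro[of 1 "\<lambda>_. v" X W "\<lambda>_. one"] by (simp add: star_one_L)

lemma DX_Lmul:
  assumes "d \<in> DX W X" shows "star W (lin v) d \<in> DX W X"
proof -
  obtain N u vv where 1: "\<forall>t<(N::nat). vv t \<in> X" "d = (\<Sum>t<N. star W (u t) (lin (vv t)))"
    using assms by (rule DX_elim)
  have "star W (lin v) d = (\<Sum>t<N. star W (star W (lin v) (u t)) (lin (vv t)))"
    unfolding 1 star_sum_R by (simp add: star_L star_R LR)
  then show ?thesis using DX_intro[OF 1(1), of W "\<lambda>t. star W (lin v) (u t)"] by simp
qed

lemma sh_sumf: "sh (\<Sum>t\<in>A. f t) = (\<Sum>t\<in>A. sh (f t))"
proof -
  have e: "(\<Sum>t\<in>A. f t) = (\<lambda>y. \<Sum>t\<in>A. f t y)" by (rule ext) (simp add: sum_fun_apply)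
  show ?thesis unfolding e by (rule ext) (simp add: sh_sum sum_fun_apply)
qed

lemma sh_Rop: "sh (Rop W v a) = Rop W v (sh a)"
  by (rule ext) (simp add: Rop_alt sh_add sh_div Aop_sh Brop_shf)

lemma DX_sh:
  assumes "d \<in> DX W X" shows "sh d \<in> DX W X"
proof -
  obtain N u vv where 1: "\<forall>t<(N::nat). vv t \<in> X" "d = (\<Sum>t<N. star W (u t) (lin (vv t)))"
    using assms by (rule DX_elim)
  have "sh d = (\<Sum>t<N. star W (sh (u t)) (lin (vv t)))"
    unfolding 1 sh_sumf by (simp add: star_R sh_Rop)
  then show ?thesis using DX_intro[OF 1(1), of W "\<lambda>t. sh (u t)"] by simp
qed

lemma sh_diff: "sh (a - b) = sh a - sh b"
  by (rule ext) (simp add: sh_def split: prod.splits)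

lemma star_diff_R: "star W a (b1 - b2) = star W a b1 - star W a b2"
  by (rule ext, clarify) (simp add: star_at algebra_simps sum_subtractf)

lemma pi0_DX: "d \<in> DX W X \<Longrightarrow> pi0 d \<in> IdX X"
proof -
  assume "d \<in> DX W X"
  then obtain N u vv where 1: "\<forall>t<(N::nat). vv t \<in> X" "d = (\<Sum>t<N. star W (u t) (lin (vv t)))"
    by (rule DX_elim)
  have "pi0 d = (\<lambda>\<gamma>. \<Sum>t<N. \<Sum>j\<in>UNIV. vv t j * mx j (pi0 (u t)) \<gamma>)"
    unfolding 1 pi0_sum by (simp add: star_R pi0_Rop)
  then show ?thesis using IdX_intro[OF 1(1), of "\<lambda>t. pi0 (u t)"] by simp
qed

lemma JJ_iff: "u \<in> JJ W X \<longleftrightarrow> pi0 u \<in> IdX X"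
proof
  assume "u \<in> JJ W X"
  then obtain w v where w: "w \<in> DX W X" "u - w = star W hbar v" unfolding JJ_def by auto
  have "u = w + sh v" using w(2) by (simp add: star_hbar algebra_simps)
  then have "pi0 u = pi0 w" by (simp add: pi0_def sh_def)
  then show "pi0 u \<in> IdX X" using pi0_DX[OF w(1)] by simp
next
  assume "pi0 u \<in> IdX X"
  then obtain N a vv where 1: "\<forall>t<(N::nat). vv t \<in> X" "pi0 u = (\<lambda>\<gamma>. \<Sum>t<N. \<Sum>j\<in>UNIV. vv t j * mx j (a t) \<gamma>)"
    unfolding IdX_def by auto
  define ah where "ah t = (\<lambda>(\<alpha>, m::nat). if m = 0 then a t \<alpha> else (0::'b))" for t
  define w where "w = (\<Sum>t<N. star W (ah t) (lin (vv t)))"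
  have wD: "w \<in> DX W X" unfolding w_def by (rule DX_intro[OF 1(1)])
  have "pi0 (ah t) = a t" for t by (rule ext) (simp add: pi0_def ah_def)
  then have pw: "pi0 w = pi0 u" unfolding w_def 1(2) pi0_sum by (simp add: star_R pi0_Rop)
  define z where "z = u - w"
  have z0: "z (\<alpha>, 0) = 0" for \<alpha>
    using fun_cong[OF pw, of \<alpha>] unfolding z_def pi0_def by simp
  define v' where "v' = (\<lambda>(\<alpha>, m). z (\<alpha>, m + 1))"
  have "sh v' = z"
  proof (rule ext, clarify)
    fix \<alpha> m show "sh v' (\<alpha>, m) = z (\<alpha>, m)"
      by (cases m) (simp_all add: sh_def v'_def z0)
  qed
  then have "u - w = star W hbar v'" by (simp add: star_hbar z_def)
  then show "u \<in> JJ W X" unfolding JJ_def using wD by blast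
qed

lemma JJ_DX: "d \<in> DX W X \<Longrightarrow> d \<in> JJ W X"
  by (simp add: JJ_iff pi0_DX)

lemma JJ_add: "a \<in> JJ W X \<Longrightarrow> b \<in> JJ W X \<Longrightarrow> a + b \<in> JJ W X"
  by (simp add: JJ_iff pi0_add I_add)

lemma JJ_diff: "a \<in> JJ W X \<Longrightarrow> b \<in> JJ W X \<Longrightarrow> a - b \<in> JJ W X"
  by (simp add: JJ_iff pi0_diff I_diff)

lemma JJ_zero: "0 \<in> JJ W X"
  using JJ_DX[OF DX_zero] .

lemma JJ_sum: "(\<And>t. t \<in> A \<Longrightarrow> g t \<in> JJ W X) \<Longrightarrow> (\<Sum>t\<in>A. g t) \<in> JJ W X"
proof (induct A rule: infinite_finite_induct)
  case (infinite A) show ?case by (subst sum.infinite[OF infinite(1)]) (rule JJ_zero)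
next
  case empty then show ?case using JJ_zero by (simp only: sum.empty)
next
  case (insert x F)
  show ?case unfolding sum.insert[OF insert(1) insert(2)]
    by (rule JJ_add) (use insert in auto)
qed

lemma JJ_sh: "sh v \<in> JJ W X"
  by (simp add: JJ_iff pi0_sh I_zero)

lemma JJ_starR: "j \<in> JJ W X \<Longrightarrow> star W b j \<in> JJ W X"
  by (simp add: JJ_iff star0 I_conv)

lemma JJ_linL: "v \<in> X \<Longrightarrow> star W (lin v) c \<in> JJ W X"
  by (simp add: JJ_iff star_L pi0_Lop I_lin)

lemma Mcls_mem: "b \<in> Mcls W X a \<longleftrightarrow> b - a \<in> DX W X"
  by (simp add: Mcls_def)

lemma Mcls_self: "a \<in> Mcls W X a"
  by (simp add: Mcls_mem DX_zero)

lemma Mcls_eq: "a - b \<in> DX W X \<Longrightarrow> Mcls W X a = Mcls W X b"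
proof (rule set_eqI)
  fix c assume H: "a - b \<in> DX W X"
  show "c \<in> Mcls W X a \<longleftrightarrow> c \<in> Mcls W X b"
  proof
    assume "c \<in> Mcls W X a"
    then have "c - a \<in> DX W X" by (simp only: Mcls_mem)
    have e: "c - a + (a - b) = c - b" by (simp add: algebra_simps)
    from DX_add[OF \<open>c - a \<in> DX W X\<close> H] have "c - b \<in> DX W X" by (simp only: e)
    then show "c \<in> Mcls W X b" by (simp only: Mcls_mem)
  next
    assume "c \<in> Mcls W X b"
    then have "c - b \<in> DX W X" by (simp only: Mcls_mem)
    have e: "c - b - (a - b) = c - a" by (simp add: algebra_simps)
    from DX_diff[OF \<open>c - b \<in> DX W X\<close> H] have "c - a \<in> DX W X" by (simp only: e)
    then show "c \<in> Mcls W X a" by (simp only: Mcls_mem)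
  qed
qed

lemma Mcls_Mcar: "Mcls W X a \<in> Mcar W X"
  by (simp add: Mcar_def)

lemma Mcar_elim: "m \<in> Mcar W X \<Longrightarrow> (\<And>a. m = Mcls W X a \<Longrightarrow> P) \<Longrightarrow> P"
  unfolding Mcar_def by blast

lemma mact_lin: "mact W X (lin v) (Mcls W X c) = Mcls W X (star W (lin v) c)"
proof -
  have H: "Mcls W X (star W (lin v) c') = Mcls W X (star W (lin v) c)" if "c' \<in> Mcls W X c" for c'
  proof (rule Mcls_eq)
    have "c' - c \<in> DX W X" using that by (simp add: Mcls_mem)
    then show "star W (lin v) c' - star W (lin v) c \<in> DX W X"
      using DX_Lmul[of "c' - c" W X v] by (simp add: star_diff_R)
  qed
  have "(\<Union>c'\<in>Mcls W X c. Mcls W X (star W (lin v) c')) = (\<Union>c'\<in>Mcls W X c. Mcls W X (star W (lin v) c))"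
    by (rule SUP_cong[OF refl]) (rule H)
  also have "\<dots> = Mcls W X (star W (lin v) c)"
    using Mcls_self[of c W X] by (simp only: UN_constant) auto
  finally show ?thesis unfolding mact_def .
qed

lemma mhmult_sh: "mhmult W X (\<lambda>p. if p = 1 then 1 else 0) (Mcls W X z) = Mcls W X (sh z)"
proof -
  have H: "Mcls W X (hmult (\<lambda>p. if p = 1 then 1 else 0) z') = Mcls W X (sh z)" if "z' \<in> Mcls W X z" for z'
  proof (rule Mcls_eq)
    have "z' - z \<in> DX W X" using that by (simp add: Mcls_mem)
    then show "hmult (\<lambda>p. if p = 1 then 1 else 0) z' - sh z \<in> DX W X"
      using DX_sh[of "z' - z" W X] \<open>z' - z \<in> DX W X\<close> unfolding hmult_sh sh_diff by blast
  qed
  have "(\<Union>z'\<in>Mcls W X z. Mcls W X (hmult (\<lambda>p. if p = 1 then 1 else 0) z')) = (\<Union>z'\<in>Mcls W X z. Mcls W X (sh z))"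
    by (rule SUP_cong[OF refl]) (rule H)
  also have "\<dots> = Mcls W X (sh z)"
    using Mcls_self[of z W X] by (simp only: UN_constant) auto
  finally show ?thesis unfolding mhmult_def .
qed

lemma mhmult_0: "mhmult W X (\<lambda>_. 0) (Mcls W X z) = Mcls W X 0"
  unfolding mhmult_def hmult_0 using Mcls_self[of z W X] by (simp only: UN_constant) auto

lemma mact_mem: "star W u c \<in> mact W X u (Mcls W X c)"
  unfolding mact_def using Mcls_self[of c W X] Mcls_self[of "star W u c" W X] by auto

lemma madd_mem: "a \<in> m1 \<Longrightarrow> b \<in> m2 \<Longrightarrow> a + b \<in> madd W X m1 m2"
  unfolding madd_def using Mcls_self[of "a + b" W X] by auto



lemma khlin_zero: "khlin f \<Longrightarrow> f 0 = 0"
  unfolding khlin_def by (metis add_cancel_right_right add_0)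

lemma khlin_sum: "khlin f \<Longrightarrow> f (\<Sum>t\<in>A. g t) = (\<Sum>t\<in>A. f (g t))"
proof (induct A rule: infinite_finite_induct)
  case (infinite A) show ?case unfolding sum.infinite[OF infinite(1)] by (rule khlin_zero[OF infinite(2)])
next
  case empty show ?case unfolding sum.empty by (rule khlin_zero[OF empty])
next
  case (insert x F)
  have "f (g x + (\<Sum>t\<in>F. g t)) = f (g x) + f (\<Sum>t\<in>F. g t)"
    using insert(4) unfolding khlin_def by blast
  then show ?case unfolding sum.insert[OF insert(1) insert(2)] by (simp only: insert(3)[OF insert(4)])
qed

lemma DX_single: "v \<in> X \<Longrightarrow> star W a (lin v) \<in> DX W X"
  using DX_intro[of 1 "\<lambda>_. v" X W "\<lambda>_. a"] by simp

lemma JJ_elim: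
  assumes "u \<in> JJ W X"
  obtains N a vv t where "\<forall>s<(N::nat). vv s \<in> X" "u = (\<Sum>s<N. star W (a s) (lin (vv s))) + sh t"
proof -
  obtain w t where w: "w \<in> DX W X" "u - w = star W hbar t" using assms unfolding JJ_def by auto
  obtain N a vv where 1: "\<forall>s<(N::nat). vv s \<in> X" "w = (\<Sum>s<N. star W (a s) (lin (vv s)))"
    using w(1) by (rule DX_elim)
  have "u = w + sh t" using w(2) by (simp add: star_hbar algebra_simps)
  then show ?thesis using that 1 by blast
qed

lemma sh_hmult: "sh t = hmult (\<lambda>p. if p = 1 then 1 else 0) t"
  by (rule hmult_sh[symmetric])

lemma aut_lin:
  assumes fg: "(f, g) \<in> AutDM W X" and v: "v \<in> X"
  shows "f (lin v) \<in> JJ W X"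
proof -
  have bij: "bij_betw g (Mcar W X) (Mcar W X)" and kl: "khlinM W X g"
    and H: "\<forall>u. \<forall>m\<in>Mcar W X. g (mact W X u m) = mact W X (f u) (g m)"
    using fg unfolding AutDM_def by auto
  have "Mcls W X one \<in> g ` Mcar W X" using bij Mcls_Mcar unfolding bij_betw_def by auto
  then obtain m' where m': "m' \<in> Mcar W X" "g m' = Mcls W X one" by auto
  then obtain c where c: "m' = Mcls W X c" by (auto elim: Mcar_elim)
  let ?l = "lin v"
  have "star W ?l c \<in> JJ W X" using v by (rule JJ_linL)
  then obtain w' t' where w': "w' \<in> DX W X" "star W ?l c - w' = star W hbar t'" unfolding JJ_def by auto
  have "Mcls W X (star W ?l c) = Mcls W X (sh t')"
    by (rule Mcls_eq) (use w' in \<open>simp add: star_hbar algebra_simps\<close>)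
  then have e1: "mact W X ?l m' = mhmult W X (\<lambda>p. if p = 1 then 1 else 0) (Mcls W X t')"
    unfolding c mact_lin mhmult_sh .
  have "g (Mcls W X t') \<in> g ` Mcar W X" by (rule imageI, rule Mcls_Mcar)
  then have "g (Mcls W X t') \<in> Mcar W X" using bij unfolding bij_betw_def by simp
  then obtain z where z: "g (Mcls W X t') = Mcls W X z" by (auto elim: Mcar_elim)
  have "g (mact W X ?l m') = mhmult W X (\<lambda>p. if p = 1 then 1 else 0) (g (Mcls W X t'))"
    unfolding e1 using kl Mcls_Mcar unfolding khlinM_def by blast
  also have "\<dots> = Mcls W X (sh z)" unfolding z mhmult_sh ..
  finally have "g (mact W X ?l m') = Mcls W X (sh z)" .
  moreover have "g (mact W X ?l m') = mact W X (f ?l) (g m')" using H m'(1) by blast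
  ultimately have "mact W X (f ?l) (Mcls W X one) = Mcls W X (sh z)" using m'(2) by simp
  moreover have "f ?l \<in> mact W X (f ?l) (Mcls W X one)"
    using mact_mem[where W=W and u="f ?l" and X=X and c=one] by (simp add: star_one_R)
  ultimately have "f ?l - sh z \<in> DX W X" by (simp add: Mcls_mem)
  moreover have "f ?l - (f ?l - sh z) = star W hbar z" by (simp add: star_hbar)
  ultimately show ?thesis unfolding JJ_def by blast
qed

lemma aut_part:
  assumes fg: "(f, g) \<in> AutDM W X" and u: "u \<in> JJ W X"
  shows "f u \<in> JJ W X"
proof -
  have fA: "f \<in> AutD W" using fg unfolding AutDM_def by auto
  then have kh: "khlin f" and hom: "\<forall>a b. f (star W a b) = star W (f a) (f b)" unfolding AutD_def by auto
  obtain N a vv t where 1: "\<forall>s<(N::nat). vv s \<in> X" "u = (\<Sum>s<N. star W (a s) (lin (vv s))) + sh t"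
    using u by (rule JJ_elim)
  have "f u = f (\<Sum>s<N. star W (a s) (lin (vv s))) + f (sh t)"
    using kh unfolding 1 khlin_def by blast
  also have "f (\<Sum>s<N. star W (a s) (lin (vv s))) = (\<Sum>s<N. star W (f (a s)) (f (lin (vv s))))"
    unfolding khlin_sum[OF kh] using hom by simp
  also have "f (sh t) = sh (f t)" using kh unfolding sh_hmult khlin_def by blast
  finally have "f u = (\<Sum>s<N. star W (f (a s)) (f (lin (vv s)))) + sh (f t)" .
  moreover have "(\<Sum>s<N. star W (f (a s)) (f (lin (vv s)))) \<in> JJ W X"
  proof (rule JJ_sum)
    fix s assume "s \<in> {..<N}"
    then have "vv s \<in> X" using 1 by auto
    show "star W (f (a s)) (f (lin (vv s))) \<in> JJ W X" by (rule JJ_starR, rule aut_lin[OF fg]) fact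
  qed
  ultimately show ?thesis by (simp only:) (rule JJ_add, assumption, rule JJ_sh)
qed

lemma der_lin:
  assumes de: "(d, e) \<in> DerDM W X" and v: "v \<in> X"
  shows "d (lin v) \<in> JJ W X"
proof -
  have em: "e ` Mcar W X \<subseteq> Mcar W X" and kl: "khlinM W X e"
    and H: "\<forall>u. \<forall>m\<in>Mcar W X. e (mact W X u m) = madd W X (mact W X (d u) m) (mact W X u (e m))"
    using de unfolding DerDM_def by auto
  let ?l = "lin v"
  have lD: "?l \<in> DX W X" using v by (rule DX_lin)
  have "mact W X ?l (Mcls W X one) = Mcls W X 0"
    unfolding mact_lin star_one_R by (rule Mcls_eq) (simp add: lD)
  also have "\<dots> = mhmult W X (\<lambda>_. 0) (Mcls W X one)" by (simp only: mhmult_0)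
  finally have a1: "mact W X ?l (Mcls W X one) = mhmult W X (\<lambda>_. 0) (Mcls W X one)" .
  have "e (Mcls W X one) \<in> Mcar W X" using em Mcls_Mcar by blast
  then obtain z where z: "e (Mcls W X one) = Mcls W X z" by (auto elim: Mcar_elim)
  have "e (mact W X ?l (Mcls W X one)) = mhmult W X (\<lambda>_. 0) (e (Mcls W X one))"
    unfolding a1 using kl Mcls_Mcar unfolding khlinM_def by blast
  also have "\<dots> = Mcls W X 0" unfolding z mhmult_0 ..
  finally have A: "e (mact W X ?l (Mcls W X one)) = Mcls W X 0" .
  have B: "e (mact W X ?l (Mcls W X one)) = madd W X (mact W X (d ?l) (Mcls W X one)) (mact W X ?l (e (Mcls W X one)))"
    using H Mcls_Mcar by blast
  have "Mcls W X 0 = e (mact W X ?l (Mcls W X one))" using A[symmetric] .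
  also have "\<dots> = madd W X (mact W X (d ?l) (Mcls W X one)) (mact W X ?l (e (Mcls W X one)))" by (rule B)
  also have "\<dots> = madd W X (mact W X (d ?l) (Mcls W X one)) (Mcls W X (star W ?l z))"
    unfolding z mact_lin ..
  finally have "Mcls W X 0 = madd W X (mact W X (d ?l) (Mcls W X one)) (Mcls W X (star W ?l z))" .
  moreover have "d ?l + star W ?l z \<in> madd W X (mact W X (d ?l) (Mcls W X one)) (Mcls W X (star W ?l z))"
    using madd_mem[OF mact_mem[where W=W and u="d ?l" and X=X and c=one] Mcls_self[of "star W ?l z" W X]] by (simp add: star_one_R)
  ultimately have "d ?l + star W ?l z \<in> Mcls W X 0" by (simp only:)
  then have "d ?l + star W ?l z - 0 \<in> DX W X" by (simp only: Mcls_mem)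
  then have "d ?l + star W ?l z \<in> DX W X" by (simp only: diff_zero)
  then have "d ?l + star W ?l z \<in> JJ W X" by (rule JJ_DX)
  from JJ_diff[OF this JJ_linL[OF v, where c=z]] show ?thesis by (simp only: add_diff_cancel)
qed

lemma der_part:
  assumes de: "(d, e) \<in> DerDM W X" and u: "u \<in> JJ W X"
  shows "d u \<in> JJ W X"
proof -
  have dD: "d \<in> DerD W" using de unfolding DerDM_def by auto
  then have kh: "khlin d" and der: "\<forall>a b. d (star W a b) = star W (d a) b + star W a (d b)" unfolding DerD_def by auto
  obtain N a vv t where 1: "\<forall>s<(N::nat). vv s \<in> X" "u = (\<Sum>s<N. star W (a s) (lin (vv s))) + sh t"
    using u by (rule JJ_elim)
  have "d u = d (\<Sum>s<N. star W (a s) (lin (vv s))) + d (sh t)"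
    using kh unfolding 1 khlin_def by blast
  also have "d (\<Sum>s<N. star W (a s) (lin (vv s))) = (\<Sum>s<N. star W (d (a s)) (lin (vv s)) + star W (a s) (d (lin (vv s))))"
    unfolding khlin_sum[OF kh] using der by simp
  also have "d (sh t) = sh (d t)" using kh unfolding sh_hmult khlin_def by blast
  finally have "d u = (\<Sum>s<N. star W (d (a s)) (lin (vv s)) + star W (a s) (d (lin (vv s)))) + sh (d t)" .
  moreover have "(\<Sum>s<N. star W (d (a s)) (lin (vv s)) + star W (a s) (d (lin (vv s)))) \<in> JJ W X"
  proof (rule JJ_sum)
    fix s assume "s \<in> {..<N}"
    then have "vv s \<in> X" using 1 by auto
    show "star W (d (a s)) (lin (vv s)) + star W (a s) (d (lin (vv s))) \<in> JJ W X"
    proof (rule JJ_add)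
      show "star W (d (a s)) (lin (vv s)) \<in> JJ W X" by (rule JJ_DX, rule DX_single) fact
      show "star W (a s) (d (lin (vv s))) \<in> JJ W X" by (rule JJ_starR, rule der_lin[OF de]) fact
    qed
  qed
  ultimately show ?thesis by (simp only:) (rule JJ_add, assumption, rule JJ_sh)
qed

theorem lemma3p2:
  fixes W :: "'i::finite \<Rightarrow> 'i \<Rightarrow> 'k::field_char_0" and X :: "('i \<Rightarrow> 'k) set"
  assumes "symplectic W" and "lagrangian W X"
  shows "fst ` AutDM W X \<subseteq> AutDJ W X \<and> fst ` DerDM W X \<subseteq> DerDJ W X"
proof
  show "fst ` AutDM W X \<subseteq> AutDJ W X"
  proof
    fix f assume "f \<in> fst ` AutDM W X"
    then obtain g where fg: "(f, g) \<in> AutDM W X" by force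
    then have "f \<in> AutD W" unfolding AutDM_def by auto
    then show "f \<in> AutDJ W X" unfolding AutDJ_def using aut_part[OF fg] by auto
  qed
  show "fst ` DerDM W X \<subseteq> DerDJ W X"
  proof
    fix d assume "d \<in> fst ` DerDM W X"
    then obtain e where de: "(d, e) \<in> DerDM W X" by force
    then have "d \<in> DerD W" unfolding DerDM_def by auto
    then show "d \<in> DerDJ W X" unfolding DerDJ_def using der_part[OF de] by auto
  qed
qed

end
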